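(* Let $G_n$ be any connected undirected graph on $n$ nodes with constant maximum degree ($\Delta=O(1)$) and diameter $D$, and let $k\le n$ initial messages be placed arbitrarily at the nodes. Then, with high probability, the stopping time of uniform algebraic gossip (with \texttt{EXCHANGE}) disseminating the $k$ messages is $\Theta(k+D)$ rounds in the synchronous time model and $O(k+D)$ rounds in the asynchronous time model.
   Context: Gossip setting: $G_n=(V,E)$ is a connected undirected graph, $|V|=n$; $N(v)$ is the neighbor set of $v$, $\Delta=\max_v|N(v)|$, $D$ the diameter. Asynchronous time model: in each timeslot one node, chosen independently and uniformly at random from $V$, acts; $n$ consecutive timeslots form one round. Synchronous time model: in each round every node acts; information received in a round is available for sending only from the next round on. An acting node chooses a single neighbor and performs \texttt{EXCHANGE}: both nodes send a message to each other. Uniform gossip: the partner is chosen uniformly at random from $N(v)$. Algebraic gossip (random linear network coding): there are $k\le n$ initial messages $x_1,\dots,x_k\in\mathbb{F}_q^r$ ($q\ge2$) located at nodes. Each node stores linear equations over $\mathbb{F}_q$ in the unknowns $x_1,\dots,x_k$; a node holding $x_i$ initially stores the equation for $x_i$. A sent message is a random linear combination of all stored equations of the sender with coefficients uniform in $\mathbb{F}_q$; a received equation is stored only if linearly independent of the stored ones. A node is done at rank $k$; the stopping time is the number of rounds until all nodes are done. "With high probability" means with probability at least $1-O(1/n)$. *)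

theory Defs
  imports "HOL-Probability.Probability"
begin

definition simple_graph :: "nat set \<Rightarrow> (nat \<Rightarrow> nat \<Rightarrow> bool) \<Rightarrow> bool" where
  "simple_graph V E \<longleftrightarrow> finite V \<and> (\<forall>u v. E u v \<longrightarrow> u \<in> V \<and> v \<in> V)
     \<and> (\<forall>u v. E u v \<longrightarrow> E v u) \<and> (\<forall>u. \<not> E u u)"

fun walk :: "(nat \<Rightarrow> nat \<Rightarrow> bool) \<Rightarrow> nat list \<Rightarrow> bool" where
  "walk E [] = False"
| "walk E [v] = True"
| "walk E (u # v # xs) = (E u v \<and> walk E (v # xs))"

definition connected_graph :: "nat set \<Rightarrow> (nat \<Rightarrow> nat \<Rightarrow> bool) \<Rightarrow> bool" where
  "connected_graph V E \<longleftrightarrow> (\<forall>u\<in>V. \<forall>v\<in>V. \<exists>xs. walk E xs \<and> hd xs = u \<and> last xs = v)"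

definition gdist :: "(nat \<Rightarrow> nat \<Rightarrow> bool) \<Rightarrow> nat \<Rightarrow> nat \<Rightarrow> nat" where
  "gdist E u v = (LEAST m. \<exists>xs. walk E xs \<and> hd xs = u \<and> last xs = v \<and> length xs = m + 1)"

definition diameter :: "nat set \<Rightarrow> (nat \<Rightarrow> nat \<Rightarrow> bool) \<Rightarrow> nat" where
  "diameter V E = Max {gdist E u v | u v. u \<in> V \<and> v \<in> V}"

definition nbrs :: "nat set \<Rightarrow> (nat \<Rightarrow> nat \<Rightarrow> bool) \<Rightarrow> nat \<Rightarrow> nat set" where
  "nbrs V E v = {u \<in> V. E v u}"

definition max_degree :: "nat set \<Rightarrow> (nat \<Rightarrow> nat \<Rightarrow> bool) \<Rightarrow> nat" where
  "max_degree V E = Max ((\<lambda>v. card (nbrs V E v)) ` V)"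

text \<open>An equation in the unknowns x_1..x_k is represented by its coefficient vector
  (coefficient of x_(i+1) at index i).  The right-hand sides (payloads in F_q^r) are
  determined by the coefficients and play no role for ranks and the stopping time.\<close>
type_synonym 'f eqn = "nat \<Rightarrow> 'f"
type_synonym 'f gstate = "nat \<Rightarrow> 'f eqn list"  \<comment> \<open>stored equations of each node\<close>

definition lincomb :: "'f::field list \<Rightarrow> 'f eqn list \<Rightarrow> 'f eqn" where
  "lincomb cs vs = (\<lambda>j. \<Sum>i<length vs. cs ! i * (vs ! i) j)"

definition in_span :: "'f::field eqn \<Rightarrow> 'f eqn list \<Rightarrow> bool" where
  "in_span w vs \<longleftrightarrow> (\<exists>cs. length cs = length vs \<and> w = lincomb cs vs)"

definition rand_comb :: "'f::{field,finite} eqn list \<Rightarrow> 'f eqn pmf" where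
  "rand_comb vs = map_pmf (\<lambda>cs. lincomb cs vs) (pmf_of_set {cs. length cs = length vs})"

definition receive :: "'f::field eqn list \<Rightarrow> 'f eqn \<Rightarrow> 'f eqn list" where
  "receive vs w = (if in_span w vs then vs else vs @ [w])"

text \<open>rank of a node = number of stored (linearly independent) equations\<close>
definition all_done :: "nat set \<Rightarrow> nat \<Rightarrow> 'f gstate \<Rightarrow> bool" where
  "all_done V k s \<longleftrightarrow> (\<forall>v\<in>V. length (s v) = k)"

definition unit_eqn :: "nat \<Rightarrow> 'f::field eqn" where
  "unit_eqn i = (\<lambda>j. if j = i then 1 else 0)"

text \<open>message i (0 \<le> i < k) is initially located at node loc i\<close>
definition init_state :: "(nat \<Rightarrow> nat) \<Rightarrow> nat \<Rightarrow> 'f::field gstate" where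
  "init_state loc k = (\<lambda>v. map unit_eqn (filter (\<lambda>i. loc i = v) [0..<k]))"

definition exchange :: "'f::{field,finite} gstate \<Rightarrow> nat \<Rightarrow> nat \<Rightarrow> 'f gstate pmf" where
  "exchange s v u =
     do { mv \<leftarrow> rand_comb (s v); mu \<leftarrow> rand_comb (s u);
          return_pmf (s(v := receive (s v) mu, u := receive (s u) mv)) }"

text \<open>asynchronous model: one timeslot (uniformly random acting node, uniform partner)\<close>
definition async_step :: "nat set \<Rightarrow> (nat \<Rightarrow> nat \<Rightarrow> bool) \<Rightarrow> 'f::{field,finite} gstate \<Rightarrow> 'f gstate pmf" where
  "async_step V E s =
     do { v \<leftarrow> pmf_of_set V;
          if nbrs V E v = {} then return_pmf s
          else do { u \<leftarrow> pmf_of_set (nbrs V E v); exchange s v u } }"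

text \<open>synchronous model: every node chooses a partner; all messages of the round are
  computed from the state at the start of the round (each one an independent random
  combination), and then delivered.\<close>
fun draw_msgs :: "'f::{field,finite} gstate \<Rightarrow> (nat \<times> nat) list \<Rightarrow> (nat \<times> 'f eqn) list pmf" where
  "draw_msgs s [] = return_pmf []"
| "draw_msgs s ((a, b) # ps) =
     do { m \<leftarrow> rand_comb (s a); ms \<leftarrow> draw_msgs s ps; return_pmf ((b, m) # ms) }"

definition deliver :: "'f::field gstate \<Rightarrow> (nat \<times> 'f eqn) list \<Rightarrow> 'f gstate" where
  "deliver s ms = fold (\<lambda>(b, m) t. t(b := receive (t b) m)) ms s"

definition partner_pmf :: "nat set \<Rightarrow> (nat \<Rightarrow> nat \<Rightarrow> bool) \<Rightarrow> nat \<Rightarrow> nat pmf" where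
  "partner_pmf V E v = (if nbrs V E v = {} then return_pmf v else pmf_of_set (nbrs V E v))"

definition sync_round :: "nat set \<Rightarrow> (nat \<Rightarrow> nat \<Rightarrow> bool) \<Rightarrow> 'f::{field,finite} gstate \<Rightarrow> 'f gstate pmf" where
  "sync_round V E s =
     do { p \<leftarrow> Pi_pmf V 0 (partner_pmf V E);
          ms \<leftarrow> draw_msgs s (concat (map (\<lambda>v. if nbrs V E v = {} then [] else [(v, p v), (p v, v)])
                                         (sorted_list_of_set V)));
          return_pmf (deliver s ms) }"

text \<open>trajectory of m steps: list of the m+1 states s_0, ..., s_m\<close>
fun traj :: "('s \<Rightarrow> 's pmf) \<Rightarrow> 's \<Rightarrow> nat \<Rightarrow> 's list pmf" where
  "traj step s0 0 = return_pmf [s0]"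
| "traj step s0 (Suc m) = do { xs \<leftarrow> traj step s0 m; s' \<leftarrow> step (last xs); return_pmf (xs @ [s']) }"

end

theory Submission
  imports Defs
begin

definition dot :: "nat \<Rightarrow> 'f::field eqn \<Rightarrow> 'f eqn \<Rightarrow> 'f" where
  "dot k \<mu> w = (\<Sum>j<k. \<mu> j * w j)"

definition knows :: "nat \<Rightarrow> 'f::field eqn \<Rightarrow> 'f eqn list \<Rightarrow> bool" where
  "knows k \<mu> vs \<longleftrightarrow> (\<exists>w\<in>set vs. dot k \<mu> w \<noteq> 0)"

definition suppI :: "nat set \<Rightarrow> 'f::zero eqn set" where
  "suppI I = {w. \<forall>j. j \<notin> I \<longrightarrow> w j = 0}"

definition indep :: "'f::field eqn list \<Rightarrow> bool" where
  "indep vs \<longleftrightarrow> inj_on (\<lambda>cs. lincomb cs vs) {cs. length cs = length vs}"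

lemma card_field_ge2: "2 \<le> CARD('f::{field,finite})"
proof -
  have "card {0::'f, 1} \<le> CARD('f)" by (rule card_mono) auto
  then show ?thesis by simp
qed

lemma lincomb_snoc:
  assumes "length cs = length vs"
  shows "lincomb (cs @ [c]) (vs @ [w]) = (\<lambda>j. lincomb cs vs j + c * w j)"
  using assms by (auto simp: lincomb_def nth_append intro!: sum.cong)

lemma lincomb_suppI: "set vs \<subseteq> suppI I \<Longrightarrow> lincomb cs vs \<in> suppI I"
  by (auto simp: suppI_def lincomb_def subset_iff intro!: sum.neutral)

lemma dot_lincomb:
  "dot k \<mu> (lincomb cs vs) = (\<Sum>i<length vs. cs ! i * dot k \<mu> (vs ! i))"
  unfolding dot_def lincomb_def
  by (simp add: sum_distrib_left sum_distrib_right mult_ac sum.swap[of _ "{..<k}"])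

lemma knows_receive:
  assumes "dot k \<mu> w \<noteq> 0"
  shows "knows k \<mu> (receive vs w)"
proof (cases "in_span w vs")
  case True
  then obtain cs where cs: "length cs = length vs" "w = lincomb cs vs" by (auto simp: in_span_def)
  then have "(\<Sum>i<length vs. cs ! i * dot k \<mu> (vs ! i)) \<noteq> 0" using assms dot_lincomb by metis
  then obtain i where "i < length vs" "cs ! i * dot k \<mu> (vs ! i) \<noteq> 0"
    by (meson sum.neutral lessThan_iff)
  then show ?thesis using True by (auto simp: knows_def receive_def)
next
  case False
  then show ?thesis using assms by (auto simp: knows_def receive_def)
qed

lemma set_receive: "set vs \<subseteq> set (receive vs w)"
  by (auto simp: receive_def)

lemma knows_mono: "knows k \<mu> vs \<Longrightarrow> set vs \<subseteq> set ws \<Longrightarrow> knows k \<mu> ws"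
  by (auto simp: knows_def)

lemma indep_receive:
  assumes "indep vs"
  shows "indep (receive vs w)"
proof (cases "in_span w vs")
  case True then show ?thesis using assms by (simp add: receive_def)
next
  case False
  let ?m = "length vs"
  have "inj_on (\<lambda>cs. lincomb cs (vs @ [w])) {cs. length cs = Suc ?m}"
  proof (rule inj_onI)
    fix cs1 cs2 assume c1: "cs1 \<in> {cs. length cs = Suc ?m}" and c2: "cs2 \<in> {cs. length cs = Suc ?m}"
      and eq: "lincomb cs1 (vs @ [w]) = lincomb cs2 (vs @ [w])"
    obtain a c where a: "cs1 = a @ [c]" "length a = ?m"
      using c1 by (metis (mono_tags) append_butlast_last_id length_butlast list.size(3) mem_Collect_eq
          diff_Suc_1 nat.distinct(1))
    obtain b c' where b: "cs2 = b @ [c']" "length b = ?m"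
      using c2 by (metis (mono_tags) append_butlast_last_id length_butlast list.size(3) mem_Collect_eq
          diff_Suc_1 nat.distinct(1))
    have eqj: "\<And>j. lincomb a vs j + c * w j = lincomb b vs j + c' * w j"
      using eq a b by (simp add: lincomb_snoc fun_eq_iff)
    show "cs1 = cs2"
    proof (cases "c = c'")
      case True
      then have "lincomb a vs = lincomb b vs" using eqj by (auto simp: fun_eq_iff)
      then have "a = b" using assms a b by (auto simp: indep_def inj_on_def)
      then show ?thesis using a b True by simp
    next
      case False
      define ds where "ds = map (\<lambda>i. (b ! i - a ! i) / (c - c')) [0..<?m]"
      have "w = lincomb ds vs"
      proof
        fix j
        have "(c - c') * w j = lincomb b vs j - lincomb a vs j"
          using eqj[of j] by (simp add: algebra_simps)
        also have "\<dots> = (\<Sum>i<?m. (b ! i - a ! i) * (vs ! i) j)"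
          by (simp add: lincomb_def sum_subtractf[symmetric] algebra_simps)
        finally have "w j = (\<Sum>i<?m. (b ! i - a ! i) * (vs ! i) j) / (c - c')"
          using False by (simp add: field_simps)
        also have "\<dots> = lincomb ds vs j"
          by (simp add: lincomb_def ds_def sum_divide_distrib)
        finally show "w j = lincomb ds vs j" .
      qed
      then have "in_span w vs" unfolding in_span_def by (intro exI[of _ ds]) (simp add: ds_def)
      then show ?thesis using \<open>\<not> in_span w vs\<close> by simp
    qed
  qed
  then show ?thesis using False by (simp add: indep_def receive_def)
qed

lemma bij_suppI:
  "bij_betw (\<lambda>w. restrict w I) (suppI I :: ('f::zero) eqn set) (PiE I (\<lambda>_. UNIV))"
proof (rule bij_betw_imageI)
  show "inj_on (\<lambda>w. restrict w I) (suppI I :: 'f eqn set)"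
  proof (rule inj_onI)
    fix x y :: "'f eqn" assume x: "x \<in> suppI I" and y: "y \<in> suppI I" and eq: "restrict x I = restrict y I"
    show "x = y"
    proof
      fix j show "x j = y j"
      proof (cases "j \<in> I")
        case True then show ?thesis using eq by (metis restrict_apply')
      next
        case False then show ?thesis using x y by (simp add: suppI_def)
      qed
    qed
  qed
  show "(\<lambda>w. restrict w I) ` (suppI I :: 'f eqn set) = PiE I (\<lambda>_. UNIV)"
  proof
    show "(\<lambda>w. restrict w I) ` suppI I \<subseteq> PiE I (\<lambda>_. UNIV)" by auto
    show "PiE I (\<lambda>_. UNIV) \<subseteq> (\<lambda>w. restrict w I) ` (suppI I :: 'f eqn set)"
    proof
      fix g :: "nat \<Rightarrow> 'f" assume g: "g \<in> PiE I (\<lambda>_. UNIV)"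
      let ?w = "\<lambda>j. if j \<in> I then g j else 0"
      have w: "?w \<in> suppI I" by (auto simp: suppI_def)
      have r: "restrict ?w I = g" using g by (auto simp: fun_eq_iff PiE_def extensional_def)
      show "g \<in> (\<lambda>w. restrict w I) ` suppI I"
      proof (rule image_eqI)
        show "g = restrict ?w I" using r by simp
        show "?w \<in> suppI I" by (rule w)
      qed
    qed
  qed
qed

lemma card_suppI:
  assumes "finite I"
  shows "card (suppI I :: ('f::{zero,finite}) eqn set) = CARD('f) ^ card I"
proof -
  have "card (suppI I :: 'f eqn set) = card (PiE I (\<lambda>_. UNIV :: 'f set))"
    by (rule bij_betw_same_card[OF bij_suppI])
  also have "\<dots> = CARD('f) ^ card I" using assms by (simp add: card_PiE)
  finally show ?thesis .
qed

lemma finite_suppI: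
  assumes "finite I" shows "finite (suppI I :: ('f::{zero,finite}) eqn set)"
proof -
  have "finite (PiE I (\<lambda>_. UNIV :: 'f set))" using assms by (simp add: finite_PiE)
  then show ?thesis using bij_betw_finite[OF bij_suppI] by blast
qed

lemma finite_lists: "finite {cs :: ('f::finite) list. length cs = m}"
  using finite_lists_length_eq[of "UNIV :: 'f set" m] by simp

lemma card_lists: "card {cs :: ('f::finite) list. length cs = m} = CARD('f) ^ m"
  using card_lists_length_eq[of "UNIV :: 'f set" m] by simp

lemma indep_length:
  assumes "indep (vs :: ('f::{field,finite}) eqn list)" "set vs \<subseteq> suppI I" "finite I"
  shows "length vs \<le> card I"
proof -
  have "inj_on (\<lambda>cs. lincomb cs vs) {cs. length cs = length vs}" using assms by (simp add: indep_def)
  moreover have "(\<lambda>cs. lincomb cs vs) ` {cs. length cs = length vs} \<subseteq> suppI I"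
    using lincomb_suppI[OF assms(2)] by auto
  ultimately have "card {cs :: 'f list. length cs = length vs} \<le> card (suppI I :: 'f eqn set)"
    using card_inj_on_le finite_suppI[OF assms(3)] by blast
  then have "CARD('f) ^ length vs \<le> CARD('f) ^ card I"
    by (simp add: card_lists card_suppI[OF assms(3)])
  moreover have "1 < CARD('f)" using card_field_ge2[where 'f='f] by simp
  ultimately show ?thesis using power_le_imp_le_exp by blast
qed

lemma exists_orth:
  assumes "length (vs :: ('f::{field,finite}) eqn list) < k"
  shows "\<exists>\<mu>\<in>suppI {..<k}. (\<exists>j<k. \<mu> j \<noteq> 0) \<and> \<not> knows k \<mu> vs"
proof -
  let ?phi = "\<lambda>\<mu>. map (dot k \<mu>) vs"
  have "\<not> inj_on ?phi (suppI {..<k})"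
  proof
    assume inj: "inj_on ?phi (suppI {..<k})"
    have "?phi ` suppI {..<k} \<subseteq> {cs. length cs = length vs}" by auto
    then have "card (suppI {..<k} :: 'f eqn set) \<le> card {cs :: 'f list. length cs = length vs}"
      using card_inj_on_le[OF inj] finite_lists_length_eq[of "UNIV :: 'f set" "length vs"] by simp
    then have "CARD('f) ^ k \<le> CARD('f) ^ length vs"
      by (simp add: card_lists card_suppI)
    moreover have "1 < CARD('f)" using card_field_ge2[where 'f='f] by simp
    ultimately have "k \<le> length vs" using power_le_imp_le_exp by blast
    then show False using assms by simp
  qed
  then obtain m1 m2 where m: "m1 \<in> suppI {..<k}" "m2 \<in> suppI {..<k}" "m1 \<noteq> m2" "?phi m1 = ?phi m2"
    by (auto simp: inj_on_def)
  define \<mu> where "\<mu> = (\<lambda>j. m1 j - m2 j)"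
  have "\<mu> \<in> suppI {..<k}" using m by (auto simp: suppI_def \<mu>_def)
  moreover have "\<exists>j<k. \<mu> j \<noteq> 0"
  proof -
    obtain j where j: "m1 j \<noteq> m2 j" using m(3) by (auto simp: fun_eq_iff)
    have "j < k"
    proof (rule ccontr)
      assume "\<not> j < k"
      then have "m1 j = 0" "m2 j = 0" using m(1,2) by (auto simp: suppI_def)
      then show False using j by simp
    qed
    then show ?thesis using j by (auto simp: \<mu>_def)
  qed
  moreover have "\<not> knows k \<mu> vs"
  proof
    assume "knows k \<mu> vs"
    then obtain w where w: "w \<in> set vs" "dot k \<mu> w \<noteq> 0" by (auto simp: knows_def)
    have "dot k m1 w = dot k m2 w" using m(4) w(1) by (metis (no_types, lifting) map_eq_conv)
    moreover have "dot k \<mu> w = dot k m1 w - dot k m2 w"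
      by (simp add: dot_def \<mu>_def sum_subtractf[symmetric] algebra_simps)
    ultimately show False using w(2) by simp
  qed
  ultimately show ?thesis by blast
qed

fun itr :: "('s \<Rightarrow> 's pmf) \<Rightarrow> 's \<Rightarrow> nat \<Rightarrow> 's pmf" where
  "itr step s0 0 = return_pmf s0"
| "itr step s0 (Suc m) = bind_pmf (itr step s0 m) step"

lemma traj_last: "map_pmf last (traj step s0 m) = itr step s0 m"
proof (induction m)
  case 0 then show ?case by simp
next
  case (Suc m)
  have "map_pmf last (traj step s0 (Suc m)) = bind_pmf (traj step s0 m) (\<lambda>xs. step (last xs))"
    by (simp add: map_bind_pmf bind_return_pmf')
  also have "\<dots> = bind_pmf (map_pmf last (traj step s0 m)) step" by (simp add: bind_map_pmf)
  finally show ?case using Suc by simp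
qed

lemma traj_support:
  "xs \<in> set_pmf (traj step s0 m) \<Longrightarrow> length xs = Suc m \<and> xs ! 0 = s0 \<and>
     (\<forall>i<m. xs ! Suc i \<in> set_pmf (step (xs ! i)))"
proof (induction m arbitrary: xs)
  case 0 then show ?case by simp
next
  case (Suc m)
  then obtain ys s' where ys: "ys \<in> set_pmf (traj step s0 m)" "s' \<in> set_pmf (step (last ys))"
    "xs = ys @ [s']" by auto
  have IH: "length ys = Suc m" "ys ! 0 = s0" "\<forall>i<m. ys ! Suc i \<in> set_pmf (step (ys ! i))"
    using Suc.IH[OF ys(1)] by auto
  have last: "last ys = ys ! m" using IH(1) by (metis diff_Suc_1 last_conv_nth list.size(3) nat.distinct(1))
  show ?case
  proof (intro conjI allI impI)
    show "length xs = Suc (Suc m)" using ys IH by simp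
    show "xs ! 0 = s0" using ys IH by (simp add: nth_append)
    fix i assume "i < Suc m"
    then consider "i < m" | "i = m" by linarith
    then show "xs ! Suc i \<in> set_pmf (step (xs ! i))"
    proof cases
      case 1 then show ?thesis using IH ys by (simp add: nth_append)
    next
      case 2 then show ?thesis using IH ys last by (simp add: nth_append)
    qed
  qed
qed

lemma traj_inv:
  assumes "P 0 s0" "\<And>i s s'. P i s \<Longrightarrow> s' \<in> set_pmf (step s) \<Longrightarrow> P (Suc i) s'"
    "xs \<in> set_pmf (traj step s0 m)" "i < length xs"
  shows "P i (xs ! i)"
  using assms(4)
proof (induction i)
  case 0 then show ?case using traj_support[OF assms(3)] assms(1) by simp
next
  case (Suc i)
  then show ?case using traj_support[OF assms(3)] assms(2) by auto
qed

lemma itr_closed: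
  assumes "s0 \<in> R" "\<And>s. s \<in> R \<Longrightarrow> set_pmf (step s) \<subseteq> R"
  shows "set_pmf (itr step s0 m) \<subseteq> R"
  using assms by (induction m) auto

lemma itr_nn:
  fixes f :: "'s \<Rightarrow> ennreal"
  assumes "s0 \<in> R" "\<And>s. s \<in> R \<Longrightarrow> set_pmf (step s) \<subseteq> R"
    and step: "\<And>s. s \<in> R \<Longrightarrow> (\<integral>\<^sup>+x. f x \<partial>measure_pmf (step s)) \<le> \<beta> * f s"
  shows "(\<integral>\<^sup>+x. f x \<partial>measure_pmf (itr step s0 m)) \<le> \<beta> ^ m * f s0"
proof (induction m)
  case 0 then show ?case by simp
next
  case (Suc m)
  have "(\<integral>\<^sup>+x. f x \<partial>measure_pmf (itr step s0 (Suc m)))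
      = (\<integral>\<^sup>+x. (\<integral>\<^sup>+y. f y \<partial>measure_pmf (step x)) \<partial>measure_pmf (itr step s0 m))" by simp
  also have "\<dots> \<le> (\<integral>\<^sup>+x. \<beta> * f x \<partial>measure_pmf (itr step s0 m))"
  proof (rule nn_integral_mono_AE)
    show "AE x in measure_pmf (itr step s0 m). (\<integral>\<^sup>+y. f y \<partial>measure_pmf (step x)) \<le> \<beta> * f x"
    proof -
      have cl: "set_pmf (itr step s0 m) \<subseteq> R" by (rule itr_closed[OF assms(1,2)])
      show ?thesis unfolding AE_measure_pmf_iff using cl step by blast
    qed
  qed
  also have "\<dots> = \<beta> * (\<integral>\<^sup>+x. f x \<partial>measure_pmf (itr step s0 m))"
    by (rule nn_integral_cmult) simp
  also have "\<dots> \<le> \<beta> * (\<beta> ^ m * f s0)" using Suc by (intro mult_left_mono) auto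
  finally show ?case by (simp add: mult_ac)
qed

lemma step_bound:
  fixes f :: "'s \<Rightarrow> ennreal" and M :: "'s pmf"
  assumes A: "0 \<le> A" and fb: "\<And>x. x \<in> set_pmf M \<Longrightarrow> f x \<le> ennreal (if K x then A / 2 else A)"
    and p: "p \<le> measure_pmf.prob M {x. K x}"
  shows "(\<integral>\<^sup>+x. f x \<partial>measure_pmf M) \<le> ennreal ((1 - p / 2) * A)"
proof -
  have "(\<integral>\<^sup>+x. f x \<partial>measure_pmf M) \<le> (\<integral>\<^sup>+x. ennreal (A / 2) + ennreal (A / 2) * indicator {x. \<not> K x} x \<partial>measure_pmf M)"
  proof (rule nn_integral_mono_AE)
    show "AE x in measure_pmf M. f x \<le> ennreal (A / 2) + ennreal (A / 2) * indicator {x. \<not> K x} x"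
      unfolding AE_measure_pmf_iff
    proof
      fix x assume "x \<in> set_pmf M"
      then have "f x \<le> ennreal (if K x then A / 2 else A)" by (rule fb)
      also have "\<dots> = ennreal (A / 2) + ennreal (A / 2) * indicator {x. \<not> K x} x"
        using A by (auto simp: ennreal_plus[symmetric] simp del: ennreal_plus)
      finally show "f x \<le> ennreal (A / 2) + ennreal (A / 2) * indicator {x. \<not> K x} x" .
    qed
  qed
  also have "\<dots> = ennreal (A / 2) + ennreal (A / 2) * emeasure (measure_pmf M) {x. \<not> K x}"
    by (subst nn_integral_add) (auto simp: nn_integral_cmult_indicator)
  also have "emeasure (measure_pmf M) {x. \<not> K x} = ennreal (1 - measure_pmf.prob M {x. K x})"
  proof -
    have "{x. \<not> K x} = UNIV - {x. K x}" by auto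
    moreover have "measure_pmf.prob M (UNIV - {x. K x}) = 1 - measure_pmf.prob M {x. K x}"
      using measure_pmf.prob_compl[of "{x. K x}" M] by simp
    ultimately show ?thesis
      by (simp add: measure_pmf.emeasure_eq_measure)
  qed
  also have "ennreal (A / 2) + ennreal (A / 2) * ennreal (1 - measure_pmf.prob M {x. K x})
      = ennreal (A / 2 + A / 2 * (1 - measure_pmf.prob M {x. K x}))"
    using A measure_pmf.prob_le_1[of M "{x. K x}"]
    by (simp add: ennreal_mult[symmetric] ennreal_plus[symmetric] del: ennreal_plus)
  also have "\<dots> \<le> ennreal ((1 - p / 2) * A)"
    using A p by (intro ennreal_leI) (simp add: algebra_simps mult_left_mono)
  finally show ?thesis .
qed

lemma dissem:
  fixes step :: "'f::{field,finite} gstate \<Rightarrow> 'f gstate pmf" and u :: "nat \<Rightarrow> nat"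
  assumes mono: "\<And>s s' x. s' \<in> set_pmf (step s) \<Longrightarrow> set (s x) \<subseteq> set (s' x)"
    and prog: "\<And>s j. j < d \<Longrightarrow> knows k \<mu> (s (u j)) \<Longrightarrow>
                 p \<le> measure_pmf.prob (step s) {s'. knows k \<mu> (s' (u (Suc j)))}"
    and s0: "knows k \<mu> (s0 (u 0))"
    and p: "0 \<le> p" "p \<le> 1"
  shows "measure_pmf.prob (itr step s0 m) {s. \<not> knows k \<mu> (s (u d))} \<le> (1 - p / 2) ^ m * 2 ^ d"
proof -
  define R where "R = {s. knows k \<mu> (s (u 0))}"
  define J where "J s = (GREATEST j. j \<le> d \<and> knows k \<mu> (s (u j)))" for s
  define F where "F s = (if knows k \<mu> (s (u d)) then 0 else (2::real) ^ (d - J s))" for s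
  have kmono: "knows k \<mu> (s' x)" if "s' \<in> set_pmf (step s)" "knows k \<mu> (s x)" for s s' x
    using knows_mono mono that by blast
  have J1: "J s \<le> d \<and> knows k \<mu> (s (u (J s)))" if "s \<in> R" for s
    unfolding J_def by (rule GreatestI_nat[where k=0 and b=d]) (use that in \<open>auto simp: R_def\<close>)
  have J2: "j \<le> J s" if "s \<in> R" "j \<le> d" "knows k \<mu> (s (u j))" for s j
    unfolding J_def by (rule Greatest_le_nat[where b=d]) (use that in auto)
  have closed: "set_pmf (step s) \<subseteq> R" if "s \<in> R" for s
    using that kmono by (auto simp: R_def)
  have F_nonneg: "0 \<le> F s" for s by (simp add: F_def)
  have stepb: "(\<integral>\<^sup>+x. ennreal (F x) \<partial>measure_pmf (step s)) \<le> ennreal (1 - p / 2) * ennreal (F s)"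
    if sR: "s \<in> R" for s
  proof (cases "knows k \<mu> (s (u d))")
    case True
    have "(\<integral>\<^sup>+x. ennreal (F x) \<partial>measure_pmf (step s)) = (\<integral>\<^sup>+x. 0 \<partial>measure_pmf (step s))"
      by (rule nn_integral_cong_AE) (use kmono[of _ s "u d"] True in \<open>auto simp: AE_measure_pmf_iff F_def\<close>)
    then show ?thesis by simp
  next
    case False
    define j where "j = J s"
    have jd: "j \<le> d" "knows k \<mu> (s (u j))" using J1[OF sR] by (auto simp: j_def)
    have jlt: "j < d" using jd False by (cases "j = d") auto
    define A where "A = (2::real) ^ (d - j)"
    have Fs: "F s = A" using False by (simp add: F_def A_def j_def)
    have fb: "ennreal (F x) \<le> ennreal (if knows k \<mu> (x (u (Suc j))) then A / 2 else A)"
      if x: "x \<in> set_pmf (step s)" for x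
    proof (cases "knows k \<mu> (x (u d))")
      case True then show ?thesis by (simp add: F_def A_def)
    next
      case nk: False
      have xR: "x \<in> R" using closed[OF sR] x by auto
      have "j \<le> J x" using J2[OF xR jd(1)] kmono[OF x jd(2)] by simp
      have Jxd: "J x \<le> d" using J1[OF xR] by simp
      have "F x = 2 ^ (d - J x)" using nk by (simp add: F_def)
      also have "\<dots> \<le> (if knows k \<mu> (x (u (Suc j))) then A / 2 else A)"
      proof (cases "knows k \<mu> (x (u (Suc j)))")
        case True
        then have "Suc j \<le> J x" using J2[OF xR, of "Suc j"] jlt by simp
        then have "(2::real) ^ (d - J x) \<le> 2 ^ (d - Suc j)" by (intro power_increasing) auto
        also have "\<dots> = A / 2" using jlt
          by (simp add: A_def) (metis Suc_diff_Suc power_Suc2 nonzero_mult_div_cancel_right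
              zero_neq_numeral)
        finally show ?thesis using True by simp
      next
        case False
        have "(2::real) ^ (d - J x) \<le> 2 ^ (d - j)" using \<open>j \<le> J x\<close> by (intro power_increasing) auto
        then show ?thesis using False by (simp add: A_def)
      qed
      finally show ?thesis by (rule ennreal_leI)
    qed
    have "(\<integral>\<^sup>+x. ennreal (F x) \<partial>measure_pmf (step s)) \<le> ennreal ((1 - p / 2) * A)"
      using step_bound[where A=A and M="step s" and f="\<lambda>x. ennreal (F x)"
          and K="\<lambda>x. knows k \<mu> (x (u (Suc j)))" and p=p] fb prog[of j s, OF jlt jd(2)]
      by (simp add: A_def)
    also have "\<dots> = ennreal (1 - p / 2) * ennreal (F s)" using p Fs
      by (simp add: ennreal_mult A_def)
    finally show ?thesis .
  qed
  have s0R: "s0 \<in> R" using s0 by (simp add: R_def)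
  have "(\<integral>\<^sup>+x. ennreal (F x) \<partial>measure_pmf (itr step s0 m)) \<le> ennreal (1 - p / 2) ^ m * ennreal (F s0)"
    by (rule itr_nn[OF s0R closed stepb]) auto
  also have "\<dots> \<le> ennreal ((1 - p / 2) ^ m * 2 ^ d)"
  proof -
    have "F s0 \<le> 2 ^ d" by (auto simp: F_def intro: power_increasing)
    then have "ennreal (1 - p / 2) ^ m * ennreal (F s0) \<le> ennreal (1 - p / 2) ^ m * ennreal (2 ^ d)"
      by (intro mult_left_mono ennreal_leI) auto
    also have "\<dots> = ennreal ((1 - p / 2) ^ m * 2 ^ d)" using p
      by (simp add: ennreal_mult ennreal_power)
    finally show ?thesis .
  qed
  finally have I: "(\<integral>\<^sup>+x. ennreal (F x) \<partial>measure_pmf (itr step s0 m)) \<le> ennreal ((1 - p / 2) ^ m * 2 ^ d)" .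
  have "emeasure (measure_pmf (itr step s0 m)) {s. \<not> knows k \<mu> (s (u d))}
      = (\<integral>\<^sup>+x. indicator {s. \<not> knows k \<mu> (s (u d))} x \<partial>measure_pmf (itr step s0 m))" by simp
  also have "\<dots> \<le> (\<integral>\<^sup>+x. ennreal (F x) \<partial>measure_pmf (itr step s0 m))"
    by (rule nn_integral_mono) (auto simp: F_def indicator_def)
  also note I
  finally have "ennreal (measure_pmf.prob (itr step s0 m) {s. \<not> knows k \<mu> (s (u d))}) \<le> ennreal ((1 - p / 2) ^ m * 2 ^ d)"
    by (simp add: measure_pmf.emeasure_eq_measure)
  then show ?thesis using p by (subst (asm) ennreal_le_iff) auto
qed

lemma prob_mono_supp:
  assumes "\<And>x. x \<in> set_pmf M \<Longrightarrow> x \<in> B \<Longrightarrow> x \<in> A"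
  shows "measure_pmf.prob M B \<le> measure_pmf.prob M A"
proof -
  have "measure_pmf.prob M B = measure_pmf.prob M (B \<inter> set_pmf M)" by (simp add: measure_Int_set_pmf)
  also have "\<dots> \<le> measure_pmf.prob M A" using assms by (intro measure_pmf.finite_measure_mono) auto
  finally show ?thesis .
qed

lemma prob_bind_lower:
  assumes c: "0 \<le> c" and h: "\<And>x. x \<in> set_pmf M \<Longrightarrow> x \<in> B \<Longrightarrow> c \<le> measure_pmf.prob (N x) A"
  shows "measure_pmf.prob M B * c \<le> measure_pmf.prob (bind_pmf M N) A"
proof -
  have "ennreal (measure_pmf.prob M B * c) = (\<integral>\<^sup>+x. ennreal c * indicator B x \<partial>measure_pmf M)"
    using c by (simp add: nn_integral_cmult_indicator measure_pmf.emeasure_eq_measure ennreal_mult mult_ac)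
  also have "\<dots> \<le> (\<integral>\<^sup>+x. emeasure (measure_pmf (N x)) A \<partial>measure_pmf M)"
  proof (rule nn_integral_mono_AE)
    show "AE x in measure_pmf M. ennreal c * indicator B x \<le> emeasure (measure_pmf (N x)) A"
      unfolding AE_measure_pmf_iff
    proof
      fix x assume x: "x \<in> set_pmf M"
      show "ennreal c * indicator B x \<le> emeasure (measure_pmf (N x)) A"
      proof (cases "x \<in> B")
        case True
        then show ?thesis using h[OF x True] by (simp add: measure_pmf.emeasure_eq_measure)
      next
        case False then show ?thesis by simp
      qed
    qed
  qed
  also have "\<dots> = emeasure (measure_pmf (bind_pmf M N)) A" by simp
  finally show ?thesis
    using c by (simp add: measure_pmf.emeasure_eq_measure)
qed

lemma set_rand_comb:
  "set_pmf (rand_comb (vs :: ('f::{field,finite}) eqn list)) = (\<lambda>cs. lincomb cs vs) ` {cs. length cs = length vs}"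
proof -
  have "{cs :: 'f list. length cs = length vs} \<noteq> {}" by (auto intro: exI[of _ "replicate (length vs) 0"])
  then show ?thesis using finite_lists[where 'f='f] by (simp add: rand_comb_def)
qed

lemma rand_comb_suppI:
  "set vs \<subseteq> suppI I \<Longrightarrow> w \<in> set_pmf (rand_comb (vs :: ('f::{field,finite}) eqn list)) \<Longrightarrow> w \<in> suppI I"
  by (auto simp: set_rand_comb lincomb_suppI)

lemma list_update_sum:
  fixes a :: "nat \<Rightarrow> 'f::field"
  assumes "i0 < length cs"
  shows "(\<Sum>i<length cs. cs[i0 := x] ! i * a i) = (\<Sum>i<length cs. cs ! i * a i) + (x - cs ! i0) * a i0"
proof -
  have "(\<Sum>i<length cs. cs[i0 := x] ! i * a i) = (\<Sum>i<length cs. cs ! i * a i + (if i = i0 then (x - cs ! i0) * a i0 else 0))"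
    by (intro sum.cong) (auto simp: nth_list_update algebra_simps)
  also have "\<dots> = (\<Sum>i<length cs. cs ! i * a i) + (x - cs ! i0) * a i0"
    using assms by (simp add: sum.distrib)
  finally show ?thesis .
qed

lemma rand_comb_good:
  assumes "knows k \<mu> (vs :: ('f::{field,finite}) eqn list)"
  shows "1 - 1 / real CARD('f) \<le> measure_pmf.prob (rand_comb vs) {w. dot k \<mu> w \<noteq> 0}"
proof -
  let ?m = "length vs"
  let ?L = "{cs :: 'f list. length cs = ?m}"
  define a where "a i = dot k \<mu> (vs ! i)" for i
  obtain i0 where i0: "i0 < ?m" "a i0 \<noteq> 0"
    using assms by (auto simp: knows_def a_def in_set_conv_nth)
  define Lf where "Lf cs = (\<Sum>i<?m. cs ! i * a i)" for cs
  have dl: "dot k \<mu> (lincomb cs vs) = Lf cs" for cs by (simp add: dot_lincomb Lf_def a_def)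
  let ?Z = "{cs \<in> ?L. Lf cs = 0}"
  have upd: "Lf (cs[i0 := x]) = Lf cs + (x - cs ! i0) * a i0" if "cs \<in> ?L" for cs x
    using list_update_sum[of i0 cs x a] i0 that by (simp add: Lf_def)
  define g :: "'f list \<times> 'f \<Rightarrow> 'f list" where "g = (\<lambda>(cs, c). cs[i0 := cs ! i0 + c])"
  have inj: "inj_on g (?Z \<times> (UNIV :: 'f set))"
  proof (rule inj_onI)
    fix x y assume x: "x \<in> ?Z \<times> (UNIV :: 'f set)" and y: "y \<in> ?Z \<times> (UNIV :: 'f set)" and eq: "g x = g y"
    obtain cs1 c1 where x': "x = (cs1, c1)" by force
    obtain cs2 c2 where y': "y = (cs2, c2)" by force
    have l: "length cs1 = ?m" "length cs2 = ?m" "Lf cs1 = 0" "Lf cs2 = 0" using x y x' y' by auto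
    have e: "cs1[i0 := cs1 ! i0 + c1] = cs2[i0 := cs2 ! i0 + c2]" using eq x' y' by (simp add: g_def)
    have "Lf (cs1[i0 := cs1 ! i0 + c1]) = c1 * a i0" using upd[of cs1] l by simp
    moreover have "Lf (cs2[i0 := cs2 ! i0 + c2]) = c2 * a i0" using upd[of cs2] l by simp
    ultimately have c: "c1 = c2" using e i0 by simp
    have "cs1 = cs2"
    proof (rule nth_equalityI)
      show "length cs1 = length cs2" using l by simp
      fix j assume j: "j < length cs1"
      have "cs1[i0 := cs1 ! i0 + c1] ! j = cs2[i0 := cs2 ! i0 + c2] ! j" using e by simp
      then show "cs1 ! j = cs2 ! j" using j l i0 c by (cases "j = i0") (auto simp: nth_list_update)
    qed
    then show "x = y" using x' y' c by simp
  qed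
  have img: "g ` (?Z \<times> (UNIV :: 'f set)) \<subseteq> ?L" by (auto simp: g_def)
  have "card (?Z \<times> (UNIV :: 'f set)) \<le> card ?L"
    using card_inj_on_le[OF inj img finite_lists] .
  then have cz: "card ?Z * CARD('f) \<le> card ?L" by (simp add: card_cartesian_product)
  have Lpos: "0 < card ?L" using card_lists[where 'f='f and m="?m"] by simp
  have "measure_pmf.prob (rand_comb vs) {w. dot k \<mu> w = 0} = card (?L \<inter> {cs. Lf cs = 0}) / card ?L"
    unfolding rand_comb_def measure_map_pmf
    using finite_lists[where 'f='f and m="?m"] Lpos
    by (subst measure_pmf_of_set) (auto simp: dl vimage_def intro: Ex_list_of_length)
  also have "?L \<inter> {cs. Lf cs = 0} = ?Z" by auto
  also have "real (card ?Z) / card ?L \<le> 1 / real CARD('f)"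
  proof -
    have h: "real (card ?Z) * real CARD('f) \<le> real (card ?L)"
      using cz by (simp only: of_nat_mult[symmetric] of_nat_le_iff)
    have q: "0 < real CARD('f)" by simp
    have Lp: "0 < real (card ?L)" using Lpos by simp
    show ?thesis using h q Lp by (simp add: field_simps)
  qed
  finally have "measure_pmf.prob (rand_comb vs) {w. dot k \<mu> w = 0} \<le> 1 / real CARD('f)" .
  moreover have "measure_pmf.prob (rand_comb vs) {w. dot k \<mu> w \<noteq> 0} = 1 - measure_pmf.prob (rand_comb vs) {w. dot k \<mu> w = 0}"
  proof -
    have "{w. dot k \<mu> w \<noteq> 0} = UNIV - {w. dot k \<mu> w = 0}" by auto
    then show ?thesis using measure_pmf.prob_compl[of "{w. dot k \<mu> w = 0}" "rand_comb vs"] by simp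
  qed
  ultimately show ?thesis by simp
qed

lemma deliver_Cons: "deliver s ((b, m) # ms) = deliver (s(b := receive (s b) m)) ms"
  by (simp add: deliver_def)

lemma deliver_mono: "set (s x) \<subseteq> set (deliver s ms x)"
proof (induction ms arbitrary: s)
  case Nil then show ?case by (simp add: deliver_def)
next
  case (Cons bm ms)
  obtain b m where bm: "bm = (b, m)" by force
  have "set (s x) \<subseteq> set ((s(b := receive (s b) m)) x)" by (auto simp: receive_def)
  also have "\<dots> \<subseteq> set (deliver (s(b := receive (s b) m)) ms x)" by (rule Cons.IH)
  finally show ?case by (simp add: bm deliver_Cons)
qed

lemma deliver_knows:
  "(b, m) \<in> set ms \<Longrightarrow> dot k \<mu> m \<noteq> 0 \<Longrightarrow> knows k \<mu> (deliver s ms b)"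
proof (induction ms arbitrary: s)
  case Nil then show ?case by simp
next
  case (Cons bm ms)
  obtain b' m' where bm: "bm = (b', m')" by force
  show ?case
  proof (cases "(b, m) \<in> set ms")
    case True then show ?thesis using Cons by (simp add: bm deliver_Cons)
  next
    case False
    then have "b' = b" "m' = m" using Cons.prems bm by auto
    then have "knows k \<mu> ((s(b' := receive (s b') m')) b)" using knows_receive Cons.prems by simp
    then show ?thesis using knows_mono deliver_mono by (metis bm deliver_Cons)
  qed
qed

definition Inv :: "nat \<Rightarrow> 'f::field gstate \<Rightarrow> bool" where
  "Inv k s \<longleftrightarrow> (\<forall>x. set (s x) \<subseteq> suppI {..<k} \<and> indep (s x))"

lemma Inv_receive:
  assumes "Inv k s" "m \<in> suppI {..<k}"
  shows "Inv k (s(b := receive (s b) m))"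
proof -
  have "set (receive (s b) m) \<subseteq> suppI {..<k}" using assms by (auto simp: receive_def Inv_def)
  moreover have "indep (receive (s b) m)" using assms by (simp add: Inv_def indep_receive)
  ultimately show ?thesis using assms(1) by (auto simp: Inv_def)
qed

lemma deliver_Inv:
  "Inv k s \<Longrightarrow> (\<forall>bm\<in>set ms. snd bm \<in> suppI {..<k}) \<Longrightarrow> Inv k (deliver s ms)"
proof (induction ms arbitrary: s)
  case Nil then show ?case by (simp add: deliver_def)
next
  case (Cons bm ms)
  obtain b m where bm: "bm = (b, m)" by force
  have "Inv k (s(b := receive (s b) m))" using Cons.prems bm by (intro Inv_receive) auto
  then show ?case using Cons bm by (simp add: deliver_Cons)
qed

lemma length_receive: "length (receive vs w) \<le> Suc (length vs)"
  by (simp add: receive_def)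

lemma deliver_length:
  "length (deliver s ms x) \<le> length (s x) + length (filter (\<lambda>bm. fst bm = x) ms)"
proof (induction ms arbitrary: s)
  case Nil then show ?case by (simp add: deliver_def)
next
  case (Cons bm ms)
  obtain b m where bm: "bm = (b, m)" by force
  have 1: "length (deliver s (bm # ms) x) \<le> length ((s(b := receive (s b) m)) x) + length (filter (\<lambda>bm. fst bm = x) ms)"
  proof -
    have e: "deliver s (bm # ms) x = deliver (s(b := receive (s b) m)) ms x" by (simp add: bm deliver_Cons)
    show ?thesis by (subst e) (rule Cons.IH)
  qed
  show ?case
  proof (cases "b = x")
    case True
    have 2: "length ((s(b := receive (s b) m)) x) \<le> length (s x) + 1"
      using length_receive[of "s b" m] True by simp
    have 3: "length (filter (\<lambda>bm. fst bm = x) (bm # ms)) = Suc (length (filter (\<lambda>bm. fst bm = x) ms))"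
      using True bm by simp
    show ?thesis using 1 2 3 by linarith
  next
    case False
    have 2: "length ((s(b := receive (s b) m)) x) = length (s x)"
      using False by simp
    have 3: "length (filter (\<lambda>bm. fst bm = x) (bm # ms)) = length (filter (\<lambda>bm. fst bm = x) ms)"
      using False bm by simp
    show ?thesis using 1 2 3 by linarith
  qed
qed

lemma draw_msgs_support:
  "ms \<in> set_pmf (draw_msgs s ps) \<Longrightarrow> map fst ms = map snd ps \<and>
     (\<forall>i<length ps. snd (ms ! i) \<in> set_pmf (rand_comb (s (fst (ps ! i)))))"
proof (induction ps arbitrary: ms)
  case Nil then show ?case by simp
next
  case (Cons ab ps)
  obtain a b where ab: "ab = (a, b)" by force
  from Cons.prems obtain m ms' where m: "m \<in> set_pmf (rand_comb (s a))" "ms' \<in> set_pmf (draw_msgs s ps)"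
    "ms = (b, m) # ms'" by (auto simp: ab)
  show ?case using Cons.IH[OF m(2)] m ab by (auto simp: nth_Cons split: nat.splits)
qed

lemma draw_msgs_marginal:
  "i < length ps \<Longrightarrow> map_pmf (\<lambda>ms. snd (ms ! i)) (draw_msgs s ps) = rand_comb (s (fst (ps ! i)))"
proof (induction ps arbitrary: i)
  case Nil then show ?case by simp
next
  case (Cons ab ps)
  obtain a b where ab: "ab = (a, b)" by force
  show ?case
  proof (cases i)
    case 0
    then show ?thesis by (simp add: ab map_bind_pmf bind_return_pmf')
  next
    case (Suc i')
    then have "i' < length ps" using Cons.prems by simp
    then show ?thesis using Cons.IH[of i'] Suc
      by (simp add: ab map_bind_pmf pmf.map_comp o_def map_pmf_def bind_assoc_pmf bind_return_pmf)
  qed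
qed

lemma sg_finite: "simple_graph V E \<Longrightarrow> finite V" by (simp add: simple_graph_def)

lemma finite_nbrs: "simple_graph V E \<Longrightarrow> finite (nbrs V E v)"
  by (auto simp: nbrs_def simple_graph_def)

lemma nbrs_le_maxdeg: "simple_graph V E \<Longrightarrow> v \<in> V \<Longrightarrow> card (nbrs V E v) \<le> max_degree V E"
  unfolding max_degree_def by (rule Max_ge) (auto simp: sg_finite)

lemma nbrs_mem: "simple_graph V E \<Longrightarrow> E a b \<Longrightarrow> b \<in> nbrs V E a"
  by (auto simp: nbrs_def simple_graph_def)

lemma edge_in_V: "simple_graph V E \<Longrightarrow> E a b \<Longrightarrow> a \<in> V \<and> b \<in> V"
  by (auto simp: simple_graph_def)

abbreviation pairs :: "nat set \<Rightarrow> (nat \<Rightarrow> nat \<Rightarrow> bool) \<Rightarrow> (nat \<Rightarrow> nat) \<Rightarrow> (nat \<times> nat) list" where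
  "pairs V E p \<equiv> concat (map (\<lambda>v. if nbrs V E v = {} then [] else [(v, p v), (p v, v)]) (sorted_list_of_set V))"

lemma set_sync_round:
  "s' \<in> set_pmf (sync_round V E s) \<Longrightarrow>
   \<exists>p ms. p \<in> set_pmf (Pi_pmf V 0 (partner_pmf V E)) \<and> ms \<in> set_pmf (draw_msgs s (pairs V E p)) \<and> s' = deliver s ms"
  by (auto simp: sync_round_def)

lemma sync_mono:
  assumes s': "s' \<in> set_pmf (sync_round V E s)" shows "set (s x) \<subseteq> set (s' x)"
proof -
  obtain p ms where "s' = deliver s ms" using set_sync_round[OF s'] by blast
  then show ?thesis using deliver_mono by blast
qed

lemma msgs_suppI:
  assumes "Inv k s" "ms \<in> set_pmf (draw_msgs s ps)"
  shows "\<forall>bm\<in>set ms. snd bm \<in> suppI {..<k}"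
proof
  fix bm assume "bm \<in> set ms"
  then obtain i where i: "i < length ms" "bm = ms ! i" by (auto simp: in_set_conv_nth)
  have "length ms = length ps" using draw_msgs_support[OF assms(2)] by (metis length_map)
  then have "snd bm \<in> set_pmf (rand_comb (s (fst (ps ! i))))" using draw_msgs_support[OF assms(2)] i by auto
  then show "snd bm \<in> suppI {..<k}" using assms(1) by (intro rand_comb_suppI) (auto simp: Inv_def)
qed

lemma sync_Inv:
  assumes I: "Inv k s" and s': "s' \<in> set_pmf (sync_round V E s)" shows "Inv k s'"
proof -
  obtain p ms where "ms \<in> set_pmf (draw_msgs s (pairs V E p))" "s' = deliver s ms"
    using set_sync_round[OF s'] by blast
  then show ?thesis using deliver_Inv[OF I msgs_suppI[OF I]] by blast
qed

lemma sync_prog: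
  fixes s :: "'f::{field,finite} gstate"
  assumes G: "simple_graph V E" and ab: "E a b" and kn: "knows k \<mu> (s a)"
  shows "(1 - 1 / real CARD('f)) / real (card (nbrs V E a)) \<le>
           measure_pmf.prob (sync_round V E s) {s'. knows k \<mu> (s' b)}"
proof -
  have aV: "a \<in> V" using edge_in_V[OF G ab] by simp
  have bN: "b \<in> nbrs V E a" using nbrs_mem[OF G ab] .
  have finN: "finite (nbrs V E a)" using finite_nbrs[OF G] .
  have Nne: "nbrs V E a \<noteq> {}" using bN by auto
  have finV: "finite V" using sg_finite[OF G] .
  have c: "0 \<le> 1 - 1 / real CARD('f)" using card_field_ge2[where 'f='f] by simp
  have "measure_pmf.prob (Pi_pmf V 0 (partner_pmf V E)) {p. p a = b}
      = measure_pmf.prob (map_pmf (\<lambda>f. f a) (Pi_pmf V 0 (partner_pmf V E))) {b}"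
    by (simp add: vimage_def)
  also have "\<dots> = measure_pmf.prob (pmf_of_set (nbrs V E a)) {b}"
    using aV Nne by (simp add: Pi_pmf_component[OF finV] partner_pmf_def)
  also have "\<dots> = 1 / real (card (nbrs V E a))"
    using bN finN Nne by (simp add: measure_pmf_of_set)
  finally have P1: "measure_pmf.prob (Pi_pmf V 0 (partner_pmf V E)) {p. p a = b} = 1 / real (card (nbrs V E a))" .
  have inner: "1 - 1 / real CARD('f) \<le> measure_pmf.prob
       (draw_msgs s (pairs V E p) \<bind> (\<lambda>ms. return_pmf (deliver s ms))) {s'. knows k \<mu> (s' b)}"
    if p: "p a = b" for p
  proof -
    let ?ps = "pairs V E p"
    have "(a, b) \<in> set ?ps" using aV finV Nne p by (auto intro!: bexI[of _ a])
    then obtain i where i: "i < length ?ps" "?ps ! i = (a, b)" by (meson in_set_conv_nth)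
    have "1 - 1 / real CARD('f) \<le> measure_pmf.prob (rand_comb (s a)) {w. dot k \<mu> w \<noteq> 0}"
      by (rule rand_comb_good[OF kn])
    also have "rand_comb (s a) = map_pmf (\<lambda>ms. snd (ms ! i)) (draw_msgs s ?ps)"
      using draw_msgs_marginal[OF i(1), of s] i(2) by simp
    also have "measure_pmf.prob \<dots> {w. dot k \<mu> w \<noteq> 0}
        = measure_pmf.prob (draw_msgs s ?ps) {ms. dot k \<mu> (snd (ms ! i)) \<noteq> 0}"
      by (simp add: vimage_def)
    also have "\<dots> \<le> measure_pmf.prob (draw_msgs s ?ps) {ms. knows k \<mu> (deliver s ms b)}"
    proof (rule prob_mono_supp)
      fix ms assume ms: "ms \<in> set_pmf (draw_msgs s ?ps)" "ms \<in> {ms. dot k \<mu> (snd (ms ! i)) \<noteq> 0}"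
      have mf: "map fst ms = map snd ?ps" using draw_msgs_support[OF ms(1)] by simp
      have ll: "length ms = length ?ps" using arg_cong[where f=length, OF mf] by (simp only: length_map)
      have li: "i < length ms" using i(1) ll by simp
      have "fst (ms ! i) = snd (?ps ! i)"
        using arg_cong[where f="\<lambda>l. l ! i", OF mf] li i(1) by (simp only: nth_map)
      then have "fst (ms ! i) = b" using i(2) by simp
      then have "(b, snd (ms ! i)) \<in> set ms" using li by (metis nth_mem prod.collapse)
      then show "ms \<in> {ms. knows k \<mu> (deliver s ms b)}" using ms(2) deliver_knows by auto
    qed
    also have "\<dots> = measure_pmf.prob (draw_msgs s ?ps \<bind> (\<lambda>ms. return_pmf (deliver s ms))) {s'. knows k \<mu> (s' b)}"
      by (simp add: map_pmf_def[symmetric] vimage_def)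
    finally show ?thesis .
  qed
  have "measure_pmf.prob (Pi_pmf V 0 (partner_pmf V E)) {p. p a = b} * (1 - 1 / real CARD('f))
      \<le> measure_pmf.prob (sync_round V E s) {s'. knows k \<mu> (s' b)}"
    unfolding sync_round_def by (rule prob_bind_lower[OF c]) (use inner in auto)
  then show ?thesis using P1 by simp
qed

lemma set_exchange:
  "s' \<in> set_pmf (exchange s v u) \<Longrightarrow> \<exists>mv mu. mv \<in> set_pmf (rand_comb (s v)) \<and> mu \<in> set_pmf (rand_comb (s u))
     \<and> s' = s(v := receive (s v) mu, u := receive (s u) mv)"
  by (auto simp: exchange_def)

lemma set_async_step:
  "s' \<in> set_pmf (async_step V E s) \<Longrightarrow> s' = s \<or> (\<exists>v u. s' \<in> set_pmf (exchange s v u))"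
  by (auto simp: async_step_def split: if_splits)

lemma async_mono: "s' \<in> set_pmf (async_step V E s) \<Longrightarrow> set (s x) \<subseteq> set (s' x)"
proof -
  assume "s' \<in> set_pmf (async_step V E s)"
  then consider "s' = s" | v u mv mu where "s' = s(v := receive (s v) mu, u := receive (s u) mv)"
    using set_async_step set_exchange by metis
  then show ?thesis by cases (auto simp: receive_def)
qed

lemma async_Inv: "Inv k s \<Longrightarrow> s' \<in> set_pmf (async_step V E s) \<Longrightarrow> Inv k s'"
proof -
  assume I: "Inv k s" and s': "s' \<in> set_pmf (async_step V E s)"
  then consider "s' = s" | v u mv mu where "mv \<in> set_pmf (rand_comb (s v))" "mu \<in> set_pmf (rand_comb (s u))"
    "s' = s(v := receive (s v) mu, u := receive (s u) mv)"
    using set_async_step set_exchange by metis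
  then show ?thesis
  proof cases
    case 1 then show ?thesis using I by simp
  next
    case 2
    have mv: "mv \<in> suppI {..<k}" using 2(1) I by (intro rand_comb_suppI) (auto simp: Inv_def)
    have mu: "mu \<in> suppI {..<k}" using 2(2) I by (intro rand_comb_suppI) (auto simp: Inv_def)
    have I1: "Inv k (s(v := receive (s v) mu))" by (rule Inv_receive[OF I mu])
    have "Inv k ((s(v := receive (s v) mu))(u := receive (s u) mv))"
    proof (cases "u = v")
      case True
      then show ?thesis using Inv_receive[OF I mv, of u] by simp
    next
      case False
      then show ?thesis using Inv_receive[OF I1 mv, of u] by simp
    qed
    then show ?thesis using 2(3) by simp
  qed
qed

lemma async_prog:
  fixes s :: "'f::{field,finite} gstate"
  assumes G: "simple_graph V E" and ab: "E a b" and kn: "knows k \<mu> (s a)"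
  shows "(1 - 1 / real CARD('f)) / (real (card V) * real (card (nbrs V E a))) \<le>
           measure_pmf.prob (async_step V E s) {s'. knows k \<mu> (s' b)}"
proof -
  have aV: "a \<in> V" using edge_in_V[OF G ab] by simp
  have bN: "b \<in> nbrs V E a" using nbrs_mem[OF G ab] .
  have finN: "finite (nbrs V E a)" using finite_nbrs[OF G] .
  have Nne: "nbrs V E a \<noteq> {}" using bN by auto
  have finV: "finite V" using sg_finite[OF G] .
  have Vne: "V \<noteq> {}" using aV by auto
  have c: "0 \<le> 1 - 1 / real CARD('f)" using card_field_ge2[where 'f='f] by simp
  have ex: "1 - 1 / real CARD('f) \<le> measure_pmf.prob (exchange s a b) {s'. knows k \<mu> (s' b)}"
  proof -
    have "measure_pmf.prob (rand_comb (s a)) {w. dot k \<mu> w \<noteq> 0} * 1 \<le> measure_pmf.prob (exchange s a b) {s'. knows k \<mu> (s' b)}"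
      unfolding exchange_def
    proof (rule prob_bind_lower)
      fix mv assume mv: "mv \<in> {w. dot k \<mu> w \<noteq> 0}"
      have "measure_pmf.prob (rand_comb (s b)) UNIV * 1 \<le> measure_pmf.prob
          (rand_comb (s b) \<bind> (\<lambda>mu. return_pmf (s(a := receive (s a) mu, b := receive (s b) mv)))) {s'. knows k \<mu> (s' b)}"
        by (rule prob_bind_lower) (use mv knows_receive[of k \<mu> mv "s b"] in \<open>auto simp: indicator_def\<close>)
      then show "1 \<le> measure_pmf.prob
          (rand_comb (s b) \<bind> (\<lambda>mu. return_pmf (s(a := receive (s a) mu, b := receive (s b) mv)))) {s'. knows k \<mu> (s' b)}"
        by simp
    qed simp
    then show ?thesis using rand_comb_good[OF kn] by simp
  qed
  have step2: "measure_pmf.prob (pmf_of_set (nbrs V E a)) {b} * (1 - 1 / real CARD('f))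
      \<le> measure_pmf.prob (pmf_of_set (nbrs V E a) \<bind> exchange s a) {s'. knows k \<mu> (s' b)}"
    by (rule prob_bind_lower[OF c]) (use ex in auto)
  have step1: "measure_pmf.prob (pmf_of_set V) {a} * (measure_pmf.prob (pmf_of_set (nbrs V E a)) {b} * (1 - 1 / real CARD('f)))
      \<le> measure_pmf.prob (async_step V E s) {s'. knows k \<mu> (s' b)}"
    unfolding async_step_def
  proof (rule prob_bind_lower)
    show "0 \<le> measure_pmf.prob (pmf_of_set (nbrs V E a)) {b} * (1 - 1 / real CARD('f))" using c by simp
  next
    fix v assume "v \<in> {a}"
    then show "measure_pmf.prob (pmf_of_set (nbrs V E a)) {b} * (1 - 1 / real CARD('f))
        \<le> measure_pmf.prob (if nbrs V E v = {} then return_pmf s else pmf_of_set (nbrs V E v) \<bind> exchange s v)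
            {s'. knows k \<mu> (s' b)}"
      using step2 Nne by simp
  qed
  moreover have "measure_pmf.prob (pmf_of_set V) {a} = 1 / real (card V)"
    using aV finV Vne by (simp add: measure_pmf_of_set)
  moreover have "measure_pmf.prob (pmf_of_set (nbrs V E a)) {b} = 1 / real (card (nbrs V E a))"
    using bN finN Nne by (simp add: measure_pmf_of_set)
  ultimately show ?thesis by simp
qed

lemma walk_ne: "walk E xs \<Longrightarrow> xs \<noteq> []" by auto

lemma walk_Cons: "walk E (a # xs) \<longleftrightarrow> (xs = [] \<or> (E a (hd xs) \<and> walk E xs))"
  by (cases xs) auto

lemma walk_append: "walk E xs \<Longrightarrow> walk E ys \<Longrightarrow> last xs = hd ys \<Longrightarrow> walk E (xs @ tl ys)"
proof (induction xs)
  case Nil then show ?case by simp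
next
  case (Cons a xs)
  show ?case
  proof (cases "xs = []")
    case True
    then have "a = hd ys" using Cons by simp
    then have "(a # xs) @ tl ys = ys" using True walk_ne[OF Cons.prems(2)] by simp
    then show ?thesis using Cons by simp
  next
    case False
    then have "walk E (xs @ tl ys)" using Cons by (simp add: walk_Cons)
    then show ?thesis using Cons.prems(1) False by (simp add: walk_Cons)
  qed
qed

lemma walk_snoc: "walk E xs \<Longrightarrow> E (last xs) v \<Longrightarrow> walk E (xs @ [v])"
  using walk_append[of E xs "[last xs, v]"] by simp

lemma walk_rev: "(\<forall>u v. E u v \<longrightarrow> E v u) \<Longrightarrow> walk E xs \<Longrightarrow> walk E (rev xs)"
proof (induction xs)
  case Nil then show ?case by simp
next
  case (Cons a xs)
  show ?case
  proof (cases "xs = []")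
    case True then show ?thesis by simp
  next
    case False
    then have w: "walk E xs" "E a (hd xs)" using Cons.prems by (auto simp: walk_Cons)
    have "walk E (rev xs)" using Cons w by simp
    moreover have "last (rev xs) = hd xs" using False by (simp add: last_rev)
    ultimately show ?thesis using walk_snoc[of E "rev xs" a] w Cons.prems(1) by simp
  qed
qed

lemma walk_nth: "walk E xs \<Longrightarrow> Suc j < length xs \<Longrightarrow> E (xs ! j) (xs ! Suc j)"
proof (induction xs arbitrary: j)
  case Nil then show ?case by simp
next
  case (Cons a xs)
  have xs: "xs \<noteq> []" using Cons.prems by auto
  show ?case
  proof (cases j)
    case 0 then show ?thesis using Cons.prems xs by (auto simp: walk_Cons hd_conv_nth)
  next
    case (Suc j') then show ?thesis using Cons xs by (auto simp: walk_Cons)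
  qed
qed

lemma walk_in_V: "simple_graph V E \<Longrightarrow> walk E xs \<Longrightarrow> hd xs \<in> V \<Longrightarrow> set xs \<subseteq> V"
proof (induction xs)
  case Nil then show ?case by simp
next
  case (Cons a xs)
  show ?case
  proof (cases "xs = []")
    case True then show ?thesis using Cons by simp
  next
    case False
    then have "E a (hd xs)" "walk E xs" using Cons.prems by (auto simp: walk_Cons)
    then have "hd xs \<in> V" using Cons.prems(1) by (auto simp: simple_graph_def)
    then show ?thesis using Cons \<open>walk E xs\<close> by simp
  qed
qed

definition reach :: "(nat \<Rightarrow> nat \<Rightarrow> bool) \<Rightarrow> nat \<Rightarrow> nat \<Rightarrow> nat \<Rightarrow> bool" where
  "reach E x v t \<longleftrightarrow> (\<exists>xs. walk E xs \<and> hd xs = x \<and> last xs = v \<and> length xs \<le> Suc t)"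

lemma reach_0: "reach E x x 0"
  unfolding reach_def by (intro exI[of _ "[x]"]) simp

lemma reach_mono: "reach E x v t \<Longrightarrow> t \<le> t' \<Longrightarrow> reach E x v t'"
  unfolding reach_def by force

lemma reach_step: "reach E x a t \<Longrightarrow> E a v \<Longrightarrow> reach E x v (Suc t)"
proof -
  assume "reach E x a t" "E a v"
  then obtain xs where xs: "walk E xs" "hd xs = x" "last xs = a" "length xs \<le> Suc t"
    by (auto simp: reach_def)
  have "walk E (xs @ [v])" using walk_snoc xs \<open>E a v\<close> by simp
  moreover have "hd (xs @ [v]) = x" using xs walk_ne by (simp add: hd_append)
  ultimately show ?thesis using xs unfolding reach_def by (intro exI[of _ "xs @ [v]"]) simp
qed

lemma gdist_le: "walk E xs \<Longrightarrow> hd xs = u \<Longrightarrow> last xs = v \<Longrightarrow> length xs = m + 1 \<Longrightarrow> gdist E u v \<le> m"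
  unfolding gdist_def by (rule Least_le) blast

lemma reach_gdist: "reach E x v t \<Longrightarrow> gdist E x v \<le> t"
proof -
  assume "reach E x v t"
  then obtain xs where xs: "walk E xs" "hd xs = x" "last xs = v" "length xs \<le> Suc t"
    by (auto simp: reach_def)
  have "length xs = (length xs - 1) + 1" using walk_ne[OF xs(1)] by simp
  then have "gdist E x v \<le> length xs - 1" using gdist_le xs by blast
  then show ?thesis using xs(4) by simp
qed

lemma gdist_walk:
  assumes "connected_graph V E" "u \<in> V" "v \<in> V"
  shows "\<exists>xs. walk E xs \<and> hd xs = u \<and> last xs = v \<and> length xs = gdist E u v + 1"
proof -
  obtain xs where xs: "walk E xs" "hd xs = u" "last xs = v" using assms by (auto simp: connected_graph_def)
  have "\<exists>m xs. walk E xs \<and> hd xs = u \<and> last xs = v \<and> length xs = m + 1"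
    using xs walk_ne[OF xs(1)] by (intro exI[of _ "length xs - 1"] exI[of _ xs]) simp
  then show ?thesis unfolding gdist_def by (rule LeastI_ex)
qed

lemma gdist_reach:
  assumes "connected_graph V E" "u \<in> V" "v \<in> V"
  shows "reach E u v (gdist E u v)"
  using gdist_walk[OF assms] unfolding reach_def by auto

lemma finite_dists: "finite V \<Longrightarrow> finite {gdist E u v | u v. u \<in> V \<and> v \<in> V}"
proof -
  assume "finite V"
  have "{gdist E u v | u v. u \<in> V \<and> v \<in> V} = (\<lambda>(u, v). gdist E u v) ` (V \<times> V)" by auto
  then show ?thesis using \<open>finite V\<close> by simp
qed

lemma gdist_le_diam:
  assumes "finite V" "u \<in> V" "v \<in> V"
  shows "gdist E u v \<le> diameter V E"
  unfolding diameter_def by (rule Max_ge) (use finite_dists[OF assms(1)] assms in auto)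

lemma diam_attained:
  assumes "finite V" "V \<noteq> {}"
  shows "\<exists>x\<in>V. \<exists>y\<in>V. gdist E x y = diameter V E"
proof -
  have "diameter V E \<in> {gdist E u v | u v. u \<in> V \<and> v \<in> V}"
    unfolding diameter_def by (rule Max_in) (use finite_dists[OF assms(1)] assms in auto)
  then obtain u v where "diameter V E = gdist E u v" "u \<in> V" "v \<in> V" by blast
  then show ?thesis by metis
qed

lemma gdist_sym:
  assumes G: "simple_graph V E" and C: "connected_graph V E" and uv: "u \<in> V" "v \<in> V"
  shows "gdist E v u \<le> gdist E u v"
proof -
  obtain xs where xs: "walk E xs" "hd xs = u" "last xs = v" "length xs = gdist E u v + 1"
    using gdist_walk[OF C uv] by blast
  have "walk E (rev xs)" using walk_rev xs(1) G by (auto simp: simple_graph_def)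
  moreover have "hd (rev xs) = v" "last (rev xs) = u" using xs walk_ne[OF xs(1)] by (auto simp: hd_rev last_rev)
  ultimately show ?thesis using gdist_le xs(4) by (metis length_rev)
qed

lemma gdist_tri:
  assumes C: "connected_graph V E" and V: "x \<in> V" "y \<in> V" "z \<in> V"
  shows "gdist E x y \<le> gdist E x z + gdist E z y"
proof -
  obtain xs where xs: "walk E xs" "hd xs = x" "last xs = z" "length xs = gdist E x z + 1"
    using gdist_walk[OF C V(1,3)] by blast
  obtain ys where ys: "walk E ys" "hd ys = z" "last ys = y" "length ys = gdist E z y + 1"
    using gdist_walk[OF C V(3,2)] by blast
  have w: "walk E (xs @ tl ys)" using walk_append xs ys by simp
  have h: "hd (xs @ tl ys) = x" using xs walk_ne[OF xs(1)] by (simp add: hd_append)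
  have l: "last (xs @ tl ys) = y"
  proof (cases "tl ys = []")
    case True
    then have "ys = [z]" using ys walk_ne[OF ys(1)] by (cases ys) auto
    then show ?thesis using xs ys True by simp
  next
    case False
    then show ?thesis using ys walk_ne[OF ys(1)] by (cases ys) auto
  qed
  have "length (xs @ tl ys) = (gdist E x z + gdist E z y) + 1" using xs ys by simp
  then show ?thesis using gdist_le[OF w h l] by simp
qed

lemma ball_card:
  assumes G: "simple_graph V E" and x: "x \<in> V" and deg: "\<And>v. v \<in> V \<Longrightarrow> card (nbrs V E v) \<le> Dl"
  shows "card {v. reach E x v r} \<le> (Dl + 1) ^ r \<and> {v. reach E x v r} \<subseteq> V"
proof (induction r)
  case 0
  have "{v. reach E x v 0} \<subseteq> {x}"
  proof
    fix v assume "v \<in> {v. reach E x v 0}"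
    then obtain xs where "walk E xs" "hd xs = x" "last xs = v" "length xs \<le> 1" by (auto simp: reach_def)
    then show "v \<in> {x}" by (cases xs) auto
  qed
  then have "card {v. reach E x v 0} \<le> card {x}" by (intro card_mono) auto
  then show ?case using \<open>{v. reach E x v 0} \<subseteq> {x}\<close> x by auto
next
  case (Suc r)
  let ?W = "{v. reach E x v r}"
  have fin: "finite ?W" using Suc sg_finite[OF G] finite_subset by blast
  have sub: "{v. reach E x v (Suc r)} \<subseteq> ?W \<union> (\<Union>y\<in>?W. nbrs V E y)"
  proof
    fix v assume "v \<in> {v. reach E x v (Suc r)}"
    then obtain xs where xs: "walk E xs" "hd xs = x" "last xs = v" "length xs \<le> Suc (Suc r)"
      by (auto simp: reach_def)
    show "v \<in> ?W \<union> (\<Union>y\<in>?W. nbrs V E y)"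
    proof (cases "length xs \<le> Suc r")
      case True then show ?thesis using xs by (auto simp: reach_def)
    next
      case False
      then have len: "length xs = Suc (Suc r)" using xs(4) by simp
      define ys where "ys = butlast xs"
      have xs_eq: "xs = ys @ [v]" using xs(3) walk_ne[OF xs(1)] unfolding ys_def
        by (metis append_butlast_last_id)
      have ysl: "length ys = Suc r" using len by (simp add: ys_def)
      have "E (xs ! r) (xs ! Suc r)" using walk_nth[OF xs(1)] len by simp
      moreover have "xs ! r = last ys"
      proof -
        have "ys \<noteq> []" using ysl by auto
        then have "last ys = ys ! (length ys - 1)" by (rule last_conv_nth)
        then show ?thesis using xs_eq ysl by (simp add: nth_append)
      qed
      moreover have "xs ! Suc r = v" using xs_eq ysl by (simp add: nth_append)
      ultimately have e: "E (last ys) v" by simp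
      have wys: "walk E ys"
      proof -
        have "walk E (ys @ [v])" "ys \<noteq> []" using xs(1) xs_eq ysl by auto
        then show ?thesis
        proof (induction ys)
          case Nil then show ?case by simp
        next
          case (Cons a ys) then show ?case by (cases ys) (auto simp: walk_Cons)
        qed
      qed
      have "hd ys = x" using xs(2) xs_eq ysl by (cases ys) auto
      then have "reach E x (last ys) r" using wys ysl unfolding reach_def by auto
      moreover have "v \<in> nbrs V E (last ys)" using e G by (auto simp: nbrs_def simple_graph_def)
      ultimately show ?thesis by blast
    qed
  qed
  have "card {v. reach E x v (Suc r)} \<le> card (?W \<union> (\<Union>y\<in>?W. nbrs V E y))"
    using fin finite_nbrs[OF G] by (intro card_mono[OF _ sub]) auto
  also have "\<dots> \<le> card ?W + card (\<Union>y\<in>?W. nbrs V E y)" by (rule card_Un_le)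
  also have "card (\<Union>y\<in>?W. nbrs V E y) \<le> (\<Sum>y\<in>?W. card (nbrs V E y))" by (rule card_UN_le[OF fin])
  also have "\<dots> \<le> (\<Sum>y\<in>?W. Dl)" using Suc deg by (intro sum_mono) auto
  also have "card ?W + (\<Sum>y\<in>?W. Dl) = card ?W * (Dl + 1)" by simp
  also have "\<dots> \<le> (Dl + 1) ^ r * (Dl + 1)" using Suc by (intro mult_right_mono) auto
  finally have c: "card {v. reach E x v (Suc r)} \<le> (Dl + 1) ^ Suc r" by (simp add: mult_ac)
  have "{v. reach E x v (Suc r)} \<subseteq> V"
    using sub Suc by (auto simp: nbrs_def)
  then show ?case using c by simp
qed

lemma card_le_ball:
  assumes G: "simple_graph V E" and C: "connected_graph V E" and Vne: "V \<noteq> {}"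
    and deg: "\<And>v. v \<in> V \<Longrightarrow> card (nbrs V E v) \<le> Dl"
  shows "card V \<le> (Dl + 1) ^ diameter V E"
proof -
  obtain x where x: "x \<in> V" using Vne by blast
  have "V \<subseteq> {v. reach E x v (diameter V E)}"
  proof
    fix v assume v: "v \<in> V"
    have "reach E x v (gdist E x v)" by (rule gdist_reach[OF C x v])
    then show "v \<in> {v. reach E x v (diameter V E)}"
      using reach_mono gdist_le_diam[OF sg_finite[OF G] x v] by blast
  qed
  moreover have "card {v. reach E x v (diameter V E)} \<le> (Dl + 1) ^ diameter V E"
    "{v. reach E x v (diameter V E)} \<subseteq> V" using ball_card[OF G x deg] by auto
  ultimately show ?thesis using card_mono sg_finite[OF G] by (metis order_trans subset_antisym)
qed

lemma lincomb_units:
  assumes "distinct is" "l < length is"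
  shows "lincomb cs (map unit_eqn is) (is ! l) = (cs ! l :: 'f::field)"
proof -
  have "lincomb cs (map unit_eqn is) (is ! l) = (\<Sum>i<length is. (if i = l then cs ! l else 0))"
    unfolding lincomb_def using assms
    by (intro sum.cong) (auto simp: unit_eqn_def nth_eq_iff_index_eq)
  also have "\<dots> = cs ! l" using assms by simp
  finally show ?thesis .
qed

lemma Inv_init: "Inv k (init_state loc k :: 'f::field gstate)"
  unfolding Inv_def
proof (intro allI conjI)
  fix x
  let ?is = "filter (\<lambda>i. loc i = x) [0..<k]"
  show "set (init_state loc k x) \<subseteq> (suppI {..<k} :: 'f eqn set)"
    by (auto simp: init_state_def suppI_def unit_eqn_def)
  have d: "distinct ?is" by simp
  show "indep (init_state loc k x :: 'f eqn list)"
    unfolding indep_def init_state_def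
  proof (rule inj_onI)
    fix c1 c2 :: "'f list" assume c: "c1 \<in> {cs. length cs = length (map unit_eqn ?is :: 'f eqn list)}"
      "c2 \<in> {cs. length cs = length (map unit_eqn ?is :: 'f eqn list)}"
      and eq: "lincomb c1 (map unit_eqn ?is) = lincomb c2 (map unit_eqn ?is)"
    show "c1 = c2"
    proof (rule nth_equalityI)
      show "length c1 = length c2" using c by simp
      fix l assume "l < length c1"
      then have l: "l < length ?is" using c by simp
      show "c1 ! l = c2 ! l"
        using lincomb_units[OF d l, of c1] lincomb_units[OF d l, of c2] eq by metis
    qed
  qed
qed

lemma dot_unit: "j < k \<Longrightarrow> dot k \<mu> (unit_eqn j) = \<mu> j"
proof -
  assume j: "j < k"
  have "dot k \<mu> (unit_eqn j) = (\<Sum>i<k. if i = j then \<mu> j else 0)"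
    unfolding dot_def unit_eqn_def by (rule sum.cong) auto
  then show ?thesis using j by simp
qed

lemma init_knows:
  assumes "j < k" "\<mu> j \<noteq> 0"
  shows "knows k \<mu> (init_state loc k (loc j) :: 'f::field eqn list)"
proof -
  have "unit_eqn j \<in> set (init_state loc k (loc j) :: 'f eqn list)" using assms by (auto simp: init_state_def)
  then show ?thesis unfolding knows_def
    by (rule bexI[rotated]) (use dot_unit[OF assms(1), of \<mu>] assms(2) in simp)
qed

lemma not_done_witness:
  assumes I: "Inv k (s :: 'f::{field,finite} gstate)" and nd: "\<not> all_done V k s"
  shows "\<exists>v\<in>V. \<exists>\<mu>\<in>{\<mu>\<in>suppI {..<k}. \<exists>j<k. \<mu> j \<noteq> 0}. \<not> knows k \<mu> (s v)"
proof -
  obtain v where v: "v \<in> V" "length (s v) \<noteq> k" using nd by (auto simp: all_done_def)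
  have "length (s v) \<le> card {..<k}" using I by (intro indep_length) (auto simp: Inv_def)
  then have "length (s v) < k" using v by simp
  then obtain \<mu> where "\<mu> \<in> suppI {..<k}" "\<exists>j<k. \<mu> j \<noteq> 0" "\<not> knows k \<mu> (s v)"
    using exists_orth by blast
  then show ?thesis using v by blast
qed

lemma upper_generic:
  fixes step :: "'f::{field,finite} gstate \<Rightarrow> 'f gstate pmf"
  assumes G: "simple_graph V E" and C: "connected_graph V E" and Vne: "V \<noteq> {}"
    and loc: "\<forall>i<k. loc i \<in> V"
    and mono: "\<And>s s' x. s' \<in> set_pmf (step s) \<Longrightarrow> set (s x) \<subseteq> set (s' x)"
    and inv: "\<And>s s'. Inv k s \<Longrightarrow> s' \<in> set_pmf (step s) \<Longrightarrow> Inv k s'"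
    and prog: "\<And>s a b \<mu>. E a b \<Longrightarrow> knows k \<mu> (s a) \<Longrightarrow> p \<le> measure_pmf.prob (step s) {s'. knows k \<mu> (s' b)}"
    and p: "0 \<le> p" "p \<le> 1"
  shows "measure_pmf.prob (itr step (init_state loc k) m) {s. \<not> all_done V k s}
          \<le> real (card V) * real CARD('f) ^ k * ((1 - p / 2) ^ m * 2 ^ diameter V E)"
proof -
  let ?s0 = "init_state loc k :: 'f gstate"
  let ?M = "{\<mu> :: 'f eqn. \<mu> \<in> suppI {..<k} \<and> (\<exists>j<k. \<mu> j \<noteq> 0)}"
  let ?P = "itr step ?s0 m"
  let ?B = "(1 - p / 2) ^ m * 2 ^ diameter V E"
  have finV: "finite V" using sg_finite[OF G] .
  have finM: "finite ?M" using finite_suppI[of "{..<k}", where 'f='f] by (rule finite_subset[rotated]) auto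
  have cardM: "card ?M \<le> CARD('f) ^ k"
  proof -
    have "card ?M \<le> card (suppI {..<k} :: 'f eqn set)" using finite_suppI[of "{..<k}", where 'f='f]
      by (intro card_mono) auto
    then show ?thesis by (simp add: card_suppI)
  qed
  have invP: "set_pmf ?P \<subseteq> {s. Inv k s}"
    by (rule itr_closed) (use Inv_init inv in auto)
  have each: "measure_pmf.prob ?P {s. \<not> knows k \<mu> (s v)} \<le> ?B" if vm: "(v, \<mu>) \<in> V \<times> ?M" for v \<mu>
  proof -
    obtain j where j: "j < k" "\<mu> j \<noteq> 0" using vm by auto
    have x: "loc j \<in> V" using loc j by simp
    have v: "v \<in> V" using vm by simp
    obtain xs where xs: "walk E xs" "hd xs = loc j" "last xs = v" "length xs = gdist E (loc j) v + 1"
      using gdist_walk[OF C x v] by blast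
    define d where "d = gdist E (loc j) v"
    have dD: "d \<le> diameter V E" using gdist_le_diam[OF finV x v] by (simp add: d_def)
    have u0: "xs ! 0 = loc j" using xs walk_ne[OF xs(1)] by (simp add: hd_conv_nth)
    have ud: "xs ! d = v" using xs walk_ne[OF xs(1)] by (simp add: last_conv_nth d_def)
    have "measure_pmf.prob ?P {s. \<not> knows k \<mu> (s (xs ! d))} \<le> (1 - p / 2) ^ m * 2 ^ d"
    proof (rule dissem[where u="\<lambda>i. xs ! i"])
      show "\<And>s s' x. s' \<in> set_pmf (step s) \<Longrightarrow> set (s x) \<subseteq> set (s' x)" by (rule mono)
      show "knows k \<mu> (?s0 (xs ! 0))" using init_knows[where j=j and k=k and \<mu>=\<mu> and loc=loc, OF j] u0 by simp
      fix s i assume "i < d" "knows k \<mu> (s (xs ! i))"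
      moreover have "E (xs ! i) (xs ! Suc i)" using walk_nth[OF xs(1)] \<open>i < d\<close> xs(4) d_def by simp
      ultimately show "p \<le> measure_pmf.prob (step s) {s'. knows k \<mu> (s' (xs ! Suc i))}" using prog by blast
    qed (use p in auto)
    also have "\<dots> \<le> ?B" using dD p by (intro mult_left_mono power_increasing) auto
    finally show ?thesis using ud by simp
  qed
  have "measure_pmf.prob ?P {s. \<not> all_done V k s}
      \<le> measure_pmf.prob ?P (\<Union>vm\<in>V \<times> ?M. {s. \<not> knows k (snd vm) (s (fst vm))})"
  proof (rule prob_mono_supp)
    fix s assume "s \<in> set_pmf ?P" "s \<in> {s. \<not> all_done V k s}"
    then show "s \<in> (\<Union>vm\<in>V \<times> ?M. {s. \<not> knows k (snd vm) (s (fst vm))})"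
      using not_done_witness[of k s V] invP by force
  qed
  also have "\<dots> \<le> (\<Sum>vm\<in>V \<times> ?M. measure_pmf.prob ?P {s. \<not> knows k (snd vm) (s (fst vm))})"
    by (rule measure_pmf.finite_measure_subadditive_finite) (use finV finM in auto)
  also have "\<dots> \<le> (\<Sum>vm\<in>V \<times> ?M. ?B)"
  proof (rule sum_mono)
    fix vm assume "vm \<in> V \<times> ?M"
    then show "measure_pmf.prob ?P {s. \<not> knows k (snd vm) (s (fst vm))} \<le> ?B"
      using each[of "fst vm" "snd vm"] by simp
  qed
  also have "\<dots> = real (card V) * real (card ?M) * ?B" by (simp add: card_cartesian_product)
  also have "\<dots> \<le> real (card V) * real CARD('f) ^ k * ?B"
  proof -
    have "real (card ?M) \<le> real CARD('f) ^ k" using cardM by (simp only: of_nat_power[symmetric] of_nat_le_iff)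
    moreover have "0 \<le> ?B" using p by simp
    ultimately show ?thesis by (intro mult_right_mono mult_left_mono) auto
  qed
  finally show ?thesis .
qed

lemma Pi_partner:
  assumes G: "simple_graph V E" and p: "p \<in> set_pmf (Pi_pmf V 0 (partner_pmf V E))"
    and w: "w \<in> V" "nbrs V E w \<noteq> {}"
  shows "p w \<in> nbrs V E w"
proof -
  have "p \<in> PiE_dflt V 0 (set_pmf \<circ> partner_pmf V E)"
    by (rule subsetD[OF set_Pi_pmf_subset'[OF sg_finite[OF G], where dflt=0 and p="partner_pmf V E"] p])
  then have "p w \<in> set_pmf (partner_pmf V E w)" using w by (auto simp: PiE_dflt_def)
  then show ?thesis using w finite_nbrs[OF G] by (simp add: partner_pmf_def)
qed

lemma pairs_edges:
  assumes G: "simple_graph V E" and p: "p \<in> set_pmf (Pi_pmf V 0 (partner_pmf V E))"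
    and ab: "(a, b) \<in> set (pairs V E p)"
  shows "E a b"
proof -
  obtain w where w: "w \<in> V" "nbrs V E w \<noteq> {}" "(a, b) = (w, p w) \<or> (a, b) = (p w, w)"
    using ab sg_finite[OF G] by (auto split: if_splits)
  have "E w (p w)" using Pi_partner[OF G p w(1,2)] by (simp add: nbrs_def)
  then show ?thesis using w(3) G by (auto simp: simple_graph_def)
qed

lemma pairs_count:
  assumes G: "simple_graph V E" and p: "p \<in> set_pmf (Pi_pmf V 0 (partner_pmf V E))"
    and D: "max_degree V E \<le> Delta"
  shows "length (filter (\<lambda>ab. snd ab = v) (pairs V E p)) \<le> Delta + 1"
proof -
  have finV: "finite V" using sg_finite[OF G] .
  let ?F = "\<lambda>w. if nbrs V E w = {} then [] else [(w, p w), (p w, w)]"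
  let ?g = "\<lambda>w. length (filter (\<lambda>ab. snd ab = v) (?F w))"
  have "length (filter (\<lambda>ab. snd ab = v) (pairs V E p)) = sum_list (map ?g (sorted_list_of_set V))"
    by (simp add: filter_concat length_concat o_def)
  also have "\<dots> = (\<Sum>w\<in>V. ?g w)"
    using finV by (simp add: sum_list_distinct_conv_sum_set)
  also have "\<dots> \<le> (\<Sum>w\<in>V. of_bool (w = v) + of_bool (w \<in> nbrs V E v))"
  proof (rule sum_mono)
    fix w assume w: "w \<in> V"
    show "?g w \<le> of_bool (w = v) + of_bool (w \<in> nbrs V E v)"
    proof (cases "nbrs V E w = {}")
      case True then show ?thesis by simp
    next
      case False
      have "p w = v \<Longrightarrow> w \<in> nbrs V E v"
        using Pi_partner[OF G p w False] w G by (auto simp: nbrs_def simple_graph_def)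
      then show ?thesis using False by auto
    qed
  qed
  also have "\<dots> = card (V \<inter> {w. w = v}) + card (V \<inter> {w. w \<in> nbrs V E v})"
    using finV by (simp add: sum.distrib)
  also have "\<dots> \<le> 1 + Delta"
  proof -
    have "card (V \<inter> {w. w = v}) \<le> card {v}" by (intro card_mono) auto
    moreover have "card (V \<inter> {w. w \<in> nbrs V E v}) \<le> Delta"
    proof (cases "v \<in> V")
      case True
      have "card (V \<inter> {w. w \<in> nbrs V E v}) \<le> card (nbrs V E v)"
        using finite_nbrs[OF G] by (intro card_mono) auto
      also have "\<dots> \<le> Delta" using nbrs_le_maxdeg[OF G True] D by simp
      finally show ?thesis .
    next
      case False
      then have "nbrs V E v = {}" using G by (auto simp: nbrs_def simple_graph_def)
      then show ?thesis by simp
    qed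
    ultimately show ?thesis by simp
  qed
  finally show ?thesis by simp
qed

lemma msgs_count:
  assumes "ms \<in> set_pmf (draw_msgs s ps)"
  shows "length (filter (\<lambda>bm. fst bm = v) ms) = length (filter (\<lambda>ab. snd ab = v) ps)"
proof -
  have mf: "map fst ms = map snd ps" using draw_msgs_support[OF assms] by simp
  have "length (filter (\<lambda>bm. fst bm = v) ms) = length (filter (\<lambda>x. x = v) (map fst ms))"
    by (simp add: filter_map o_def)
  also have "\<dots> = length (filter (\<lambda>x. x = v) (map snd ps))" using mf by simp
  also have "\<dots> = length (filter (\<lambda>ab. snd ab = v) ps)" by (simp add: filter_map o_def)
  finally show ?thesis .
qed

lemma deliver_set: "set (deliver s ms x) \<subseteq> set (s x) \<union> {m. (x, m) \<in> set ms}"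
proof (induction ms arbitrary: s)
  case Nil then show ?case by (simp add: deliver_def)
next
  case (Cons bm ms)
  obtain b m where bm: "bm = (b, m)" by force
  have e: "deliver s (bm # ms) x = deliver (s(b := receive (s b) m)) ms x" by (simp add: bm deliver_Cons)
  have 1: "set (deliver (s(b := receive (s b) m)) ms x) \<subseteq> set ((s(b := receive (s b) m)) x) \<union> {m. (x, m) \<in> set ms}"
    by (rule Cons.IH)
  have 2: "set ((s(b := receive (s b) m)) x) \<subseteq> set (s x) \<union> {m. (x, m) \<in> set (bm # ms)}"
    by (auto simp: receive_def bm)
  have 3: "{m. (x, m) \<in> set ms} \<subseteq> {m. (x, m) \<in> set (bm # ms)}" by auto
  show ?case unfolding e using 1 2 3 by blast
qed

lemma lincomb_coord: "lincomb cs vs j \<noteq> 0 \<Longrightarrow> \<exists>w\<in>set vs. w j \<noteq> (0::'f::field)"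
proof -
  assume "lincomb cs vs j \<noteq> 0"
  then obtain i where "i < length vs" "cs ! i * (vs ! i) j \<noteq> 0"
    unfolding lincomb_def by (meson sum.neutral lessThan_iff)
  then show ?thesis by (auto intro: bexI[of _ "vs ! i"])
qed

definition LInv :: "nat set \<Rightarrow> (nat \<Rightarrow> nat \<Rightarrow> bool) \<Rightarrow> nat \<Rightarrow> (nat \<Rightarrow> nat) \<Rightarrow> nat \<Rightarrow> nat \<Rightarrow> 'f::field gstate \<Rightarrow> bool" where
  "LInv V E k loc Delta i s \<longleftrightarrow> Inv k s \<and>
     (\<forall>v. length (s v) \<le> length (init_state loc k v :: 'f eqn list) + i * (Delta + 1)) \<and>
     (\<forall>v. \<forall>w\<in>set (s v). \<forall>j<k. w j \<noteq> 0 \<longrightarrow> reach E (loc j) v i)"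

lemma LInv_init: "LInv V E k loc Delta 0 (init_state loc k :: 'f::field gstate)"
  unfolding LInv_def
proof (intro conjI allI ballI impI)
  show "Inv k (init_state loc k :: 'f gstate)" by (rule Inv_init)
next
  fix v show "length (init_state loc k v :: 'f eqn list) \<le> length (init_state loc k v :: 'f eqn list) + 0 * (Delta + 1)" by simp
next
  fix v j w assume w: "w \<in> set (init_state loc k v :: 'f eqn list)" and j: "j < k" "w j \<noteq> 0"
  then obtain i where "i < k" "loc i = v" "w = unit_eqn i" by (auto simp: init_state_def)
  then have "j = i" using j by (auto simp: unit_eqn_def split: if_splits)
  then show "reach E (loc j) v 0" using \<open>loc i = v\<close> reach_0 by simp
qed

lemma LInv_step:
  fixes s :: "'f::{field,finite} gstate"
  assumes G: "simple_graph V E" and D: "max_degree V E \<le> Delta"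
    and I: "LInv V E k loc Delta i s" and s': "s' \<in> set_pmf (sync_round V E s)"
  shows "LInv V E k loc Delta (Suc i) s'"
proof -
  obtain p ms where p: "p \<in> set_pmf (Pi_pmf V 0 (partner_pmf V E))"
    and ms: "ms \<in> set_pmf (draw_msgs s (pairs V E p))" and s'eq: "s' = deliver s ms"
    using set_sync_round[OF s'] by blast
  have I1: "Inv k s" using I by (simp add: LInv_def)
  have "Inv k s'" using sync_Inv[OF I1 s'] .
  moreover have "length (s' v) \<le> length (init_state loc k v :: 'f eqn list) + Suc i * (Delta + 1)" for v
  proof -
    have "length (s' v) \<le> length (s v) + length (filter (\<lambda>bm. fst bm = v) ms)"
      using deliver_length s'eq by simp
    also have "length (filter (\<lambda>bm. fst bm = v) ms) \<le> Delta + 1"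
      using msgs_count[OF ms] pairs_count[OF G p D] by simp
    also have "length (s v) \<le> length (init_state loc k v :: 'f eqn list) + i * (Delta + 1)"
      using I by (simp add: LInv_def)
    finally show ?thesis by simp
  qed
  moreover have "reach E (loc j) v (Suc i)" if w: "w \<in> set (s' v)" "j < k" "w j \<noteq> 0" for v w j
  proof -
    have "w \<in> set (s v) \<or> (v, w) \<in> set ms" using deliver_set[of s ms v] w(1) s'eq by auto
    then show ?thesis
    proof
      assume "w \<in> set (s v)"
      then have "reach E (loc j) v i" using I w by (auto simp: LInv_def)
      then show ?thesis using reach_mono by fastforce
    next
      assume vw: "(v, w) \<in> set ms"
      then obtain l where l: "l < length ms" "ms ! l = (v, w)" by (meson in_set_conv_nth)
      have mf: "map fst ms = map snd (pairs V E p)" using draw_msgs_support[OF ms] by simp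
      have ll: "length ms = length (pairs V E p)" using arg_cong[where f=length, OF mf] by (simp only: length_map)
      have lp: "l < length (pairs V E p)" using l ll by simp
      have "fst (ms ! l) = snd (pairs V E p ! l)"
        using arg_cong[where f="\<lambda>x. x ! l", OF mf] l lp by (simp only: nth_map)
      then have sv: "snd (pairs V E p ! l) = v" using l by simp
      define a where "a = fst (pairs V E p ! l)"
      have "pairs V E p ! l \<in> set (pairs V E p)" using lp by (rule nth_mem)
      moreover have "pairs V E p ! l = (a, v)" using sv unfolding a_def by (simp add: prod_eq_iff)
      ultimately have "(a, v) \<in> set (pairs V E p)" by simp
      then have e: "E a v" by (rule pairs_edges[OF G p])
      have "w \<in> set_pmf (rand_comb (s a))" using draw_msgs_support[OF ms] lp l unfolding a_def by auto
      then obtain cs where "w = lincomb cs (s a)" by (auto simp: set_rand_comb)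
      then obtain w' where "w' \<in> set (s a)" "w' j \<noteq> 0" using lincomb_coord w(3) by blast
      then have "reach E (loc j) a i" using I w(2) by (auto simp: LInv_def)
      then show ?thesis using reach_step e by blast
    qed
  qed
  ultimately show ?thesis unfolding LInv_def by blast
qed

lemma filter_two: "a \<noteq> b \<Longrightarrow> length (filter (\<lambda>i. f i = a) xs) + length (filter (\<lambda>i. f i = b) xs) \<le> length xs"
  by (induction xs) auto

lemma not_done_lower:
  fixes s :: "'f::{field,finite} gstate"
  assumes G: "simple_graph V E" and C: "connected_graph V E" and n2: "2 \<le> card V"
    and k: "1 \<le> k" and loc: "\<forall>i<k. loc i \<in> V"
    and I: "LInv V E k loc Delta i s"
    and small: "2 * i * (Delta + 1) < k \<or> 2 * i < diameter V E"
  shows "\<not> all_done V k s"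
proof
  assume dn: "all_done V k s"
  have finV: "finite V" using sg_finite[OF G] .
  from small show False
  proof
    assume sk: "2 * i * (Delta + 1) < k"
    obtain a b where ab: "a \<in> V" "b \<in> V" "a \<noteq> b"
      using n2 card_le_Suc0_iff_eq[OF finV] by fastforce
    have "length (init_state loc k a :: 'f eqn list) + length (init_state loc k b :: 'f eqn list) \<le> k"
      using filter_two[OF ab(3), of loc "[0..<k]"] by (simp add: init_state_def)
    then have "2 * length (init_state loc k a :: 'f eqn list) \<le> k \<or> 2 * length (init_state loc k b :: 'f eqn list) \<le> k"
      by linarith
    then obtain c where c: "c \<in> V" "2 * length (init_state loc k c :: 'f eqn list) \<le> k"
      using ab by blast
    have "length (s c) \<le> length (init_state loc k c :: 'f eqn list) + i * (Delta + 1)"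
      using I by (simp add: LInv_def)
    then have "length (s c) < k" using c sk by linarith
    then show False using dn c by (auto simp: all_done_def)
  next
    assume sD: "2 * i < diameter V E"
    have Vne: "V \<noteq> {}" using n2 by auto
    obtain x y where xy: "x \<in> V" "y \<in> V" "gdist E x y = diameter V E" using diam_attained[OF finV Vne] by blast
    define z where "z = loc 0"
    have z: "z \<in> V" using loc k by (simp add: z_def)
    have "diameter V E \<le> gdist E z x + gdist E z y"
      using gdist_tri[OF C xy(1,2) z] gdist_sym[OF G C z xy(1)] xy(3) by simp
    then have "i < gdist E z x \<or> i < gdist E z y" using sD by linarith
    then obtain v where v: "v \<in> V" "i < gdist E z v" using xy by blast
    have nr: "\<not> reach E z v i" using reach_gdist v(2) by fastforce
    have R: "\<forall>w\<in>set (s v). \<forall>j<k. w j \<noteq> 0 \<longrightarrow> reach E (loc j) v i" using I by (simp add: LInv_def)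
    have "\<forall>w\<in>set (s v). w 0 = 0"
    proof
      fix w assume w: "w \<in> set (s v)"
      show "w 0 = 0"
      proof (rule ccontr)
        assume "w 0 \<noteq> 0"
        then have "reach E (loc 0) v i" using R w k by auto
        then show False using nr by (simp add: z_def)
      qed
    qed
    moreover have "set (s v) \<subseteq> suppI {..<k}" "indep (s v)" using I by (auto simp: LInv_def Inv_def)
    ultimately have "set (s v) \<subseteq> suppI ({..<k} - {0})" by (auto simp: suppI_def)
    then have "length (s v) \<le> card ({..<k} - {0})" using indep_length \<open>indep (s v)\<close> by blast
    then have "length (s v) < k" using k by simp
    then show False using dn v by (auto simp: all_done_def)
  qed
qed

lemma lower_sync:
  fixes s0 :: "'f::{field,finite} gstate"
  assumes G: "simple_graph V E" and C: "connected_graph V E" and n2: "2 \<le> card V"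
    and k: "1 \<le> k" and loc: "\<forall>i<k. loc i \<in> V" and D: "max_degree V E \<le> Delta"
    and s0: "s0 = init_state loc k"
    and xs: "xs \<in> set_pmf (traj (sync_round V E) s0 m)" and i: "i < length xs"
    and small: "real i < (k + diameter V E) / (4 * (real Delta + 1))"
  shows "\<not> all_done V k (xs ! i)"
proof -
  have "LInv V E k loc Delta i (xs ! i)"
    using traj_inv[where P="LInv V E k loc Delta", OF _ _ xs i] LInv_init LInv_step[OF G D] s0 by blast
  moreover have "2 * i * (Delta + 1) < k \<or> 2 * i < diameter V E"
  proof (rule ccontr)
    assume "\<not> ?thesis"
    then have n1: "k \<le> 2 * i * (Delta + 1)" and n2: "diameter V E \<le> 2 * i" by auto
    have "real k \<le> real (2 * i * (Delta + 1))" using n1 by (simp only: of_nat_le_iff)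
    moreover have "real (diameter V E) \<le> real (2 * i)" using n2 by (simp only: of_nat_le_iff)
    ultimately have a: "real k \<le> 2 * real i * (real Delta + 1)" "real (diameter V E) \<le> 2 * real i"
      by (simp_all add: algebra_simps)
    have "real i * (4 * (real Delta + 1)) < k + diameter V E" using small by (simp add: field_simps)
    moreover have "real (diameter V E) \<le> 2 * real i * (real Delta + 1)"
    proof -
      have "2 * real i * 1 \<le> 2 * real i * (real Delta + 1)" by (intro mult_left_mono) auto
      then show ?thesis using a(2) by simp
    qed
    ultimately show False using a(1) by linarith
  qed
  ultimately show ?thesis using not_done_lower[OF G C n2 k loc] by blast
qed

lemma pow_exp: "0 < (x::real) \<Longrightarrow> x ^ n = exp (real n * ln x)"
  by (simp add: exp_of_nat_mult)

lemma final_arith: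
  fixes n q a L C T P :: real and D k Delta :: nat
  assumes n1: "1 \<le> n" and nb: "n \<le> (real Delta + 1) ^ D" and q: "2 \<le> q" and a: "0 < a"
    and L: "L = 2 * ln (real Delta + 1) + ln 2 + ln q" and C: "C = L / a"
    and T: "C * real (k + D) - 1 \<le> T"
    and P: "P \<le> n * q ^ k * (exp (- (a * T)) * 2 ^ D)"
  shows "P \<le> exp a / n"
proof -
  have l1: "0 \<le> ln (real Delta + 1)" by simp
  have l2: "0 \<le> ln (2::real)" by simp
  have l3: "0 \<le> ln q" using q by simp
  have nn: "n * n \<le> exp (real D * ln (real Delta + 1)) * exp (real D * ln (real Delta + 1))"
  proof -
    have "n \<le> exp (real D * ln (real Delta + 1))" using nb pow_exp[of "real Delta + 1" D] by simp
    then show ?thesis using n1 by (intro mult_mono) auto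
  qed
  have qk: "q ^ k = exp (real k * ln q)" using pow_exp[of q k] q by simp
  have tD: "(2::real) ^ D = exp (real D * ln 2)" using pow_exp[of 2 D] by simp
  have aC: "a * C = L" using a C by simp
  have eT: "exp (- (a * T)) \<le> exp (a - L * real (k + D))"
  proof -
    have "a * (C * real (k + D) - 1) \<le> a * T" using T a by (intro mult_left_mono) auto
    moreover have "a * (C * real (k + D) - 1) = L * real (k + D) - a"
    proof -
      have "a * (C * real (k + D)) = (a * C) * real (k + D)" by (simp add: mult.assoc)
      then show ?thesis by (simp add: right_diff_distrib aC)
    qed
    ultimately have "- (a * T) \<le> a - L * real (k + D)" by linarith
    then show ?thesis by simp
  qed
  have "P * n \<le> (n * n) * q ^ k * exp (- (a * T)) * 2 ^ D"
  proof -
    have "P * n \<le> (n * q ^ k * (exp (- (a * T)) * 2 ^ D)) * n" using P n1 by (intro mult_right_mono) auto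
    then show ?thesis by (simp add: mult_ac)
  qed
  also have "\<dots> \<le> (exp (real D * ln (real Delta + 1)) * exp (real D * ln (real Delta + 1)))
                   * exp (real k * ln q) * exp (a - L * real (k + D)) * exp (real D * ln 2)"
  proof -
    let ?X = "exp (real D * ln (real Delta + 1)) * exp (real D * ln (real Delta + 1))"
    have s1: "n * n * q ^ k \<le> ?X * q ^ k" by (rule mult_right_mono[OF nn]) (use q in simp)
    have s2: "n * n * q ^ k * exp (- (a * T)) \<le> ?X * q ^ k * exp (a - L * real (k + D))"
      by (rule mult_mono[OF s1 eT]) (use q in simp_all)
    have s3: "n * n * q ^ k * exp (- (a * T)) * 2 ^ D \<le> ?X * q ^ k * exp (a - L * real (k + D)) * 2 ^ D"
      by (rule mult_right_mono[OF s2]) simp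
    then show ?thesis unfolding qk tD .
  qed
  also have "\<dots> = exp (2 * real D * ln (real Delta + 1) + real k * ln q + (a - L * real (k + D)) + real D * ln 2)"
    by (simp add: exp_add[symmetric] algebra_simps)
  also have "\<dots> \<le> exp a"
  proof -
    have "real k * ln q \<le> real k * L" using L l1 l2 by (intro mult_left_mono) auto
    moreover have "2 * real D * ln (real Delta + 1) + real D * ln 2 \<le> real D * L"
      using L l3 by (simp add: algebra_simps)
    ultimately show ?thesis by (simp add: algebra_simps)
  qed
  finally have "P * n \<le> exp a" .
  then show ?thesis using n1 by (simp add: field_simps)
qed

lemma one_minus_pow_exp:
  fixes x :: real
  assumes "0 \<le> x" "x \<le> 1"
  shows "(1 - x) ^ m \<le> exp (- (x * real m))"
proof -
  have "1 - x \<le> exp (- x)" using exp_ge_add_one_self[of "-x"] by simp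
  then have "(1 - x) ^ m \<le> exp (- x) ^ m" using assms by (intro power_mono) auto
  also have "\<dots> = exp (- (x * real m))" by (simp add: exp_of_nat_mult[symmetric] mult_ac)
  finally show ?thesis .
qed

lemma prob_from_last:
  "1 - measure_pmf.prob (itr step s0 m) {s. \<not> P s}
     \<le> measure_pmf.prob (traj step s0 m) {xs. \<exists>i<length xs. P (xs ! i)}"
proof -
  have "measure_pmf.prob (itr step s0 m) {s. \<not> P s} = measure_pmf.prob (traj step s0 m) {xs. \<not> P (last xs)}"
    by (simp add: traj_last[symmetric] vimage_def)
  also have "\<dots> = 1 - measure_pmf.prob (traj step s0 m) {xs. P (last xs)}"
  proof -
    have "{xs. \<not> P (last xs)} = UNIV - {xs. P (last xs)}" by auto
    then show ?thesis using measure_pmf.prob_compl[of "{xs. P (last xs)}" "traj step s0 m"] by simp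
  qed
  finally have e: "1 - measure_pmf.prob (itr step s0 m) {s. \<not> P s} = measure_pmf.prob (traj step s0 m) {xs. P (last xs)}"
    by simp
  have "measure_pmf.prob (traj step s0 m) {xs. P (last xs)} \<le> measure_pmf.prob (traj step s0 m) {xs. \<exists>i<length xs. P (xs ! i)}"
  proof (rule prob_mono_supp)
    fix xs assume xs: "xs \<in> set_pmf (traj step s0 m)" "xs \<in> {xs. P (last xs)}"
    have l: "length xs = Suc m" using traj_support[OF xs(1)] by simp
    then have "last xs = xs ! m" by (metis diff_Suc_1 last_conv_nth list.size(3) nat.distinct(1))
    then show "xs \<in> {xs. \<exists>i<length xs. P (xs ! i)}" using xs(2) l by auto
  qed
  then show ?thesis using e by simp
qed

lemma upper_apply:
  fixes step :: "'f::{field,finite} gstate \<Rightarrow> 'f gstate pmf"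
  assumes G: "simple_graph V E" and C: "connected_graph V E" and Vne: "V \<noteq> {}"
    and loc: "\<forall>i<k. loc i \<in> V" and Dg: "max_degree V E \<le> Delta"
    and mono: "\<And>s s' x. s' \<in> set_pmf (step s) \<Longrightarrow> set (s x) \<subseteq> set (s' x)"
    and inv: "\<And>s s'. Inv k s \<Longrightarrow> s' \<in> set_pmf (step s) \<Longrightarrow> Inv k s'"
    and prog: "\<And>s a b \<mu>. E a b \<Longrightarrow> knows k \<mu> (s a) \<Longrightarrow> p \<le> measure_pmf.prob (step s) {s'. knows k \<mu> (s' b)}"
    and p: "0 \<le> p" "p \<le> 1"
    and a: "0 < a" and L: "L = 2 * ln (real Delta + 1) + ln 2 + ln (real CARD('f))"
    and Cd: "Cc = L / a" and T: "Cc * real (k + diameter V E) - 1 \<le> T"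
    and pm: "a * T \<le> p / 2 * real m"
  shows "1 - exp a / real (card V) \<le>
           measure_pmf.prob (traj step (init_state loc k) m) {xs. \<exists>i<length xs. all_done V k (xs ! i)}"
proof -
  let ?P = "measure_pmf.prob (itr step (init_state loc k) m) {s. \<not> all_done V k s}"
  let ?n = "real (card V)"
  let ?D = "diameter V E"
  have finV: "finite V" using sg_finite[OF G] .
  have "0 < card V" using finV Vne by (simp add: card_gt_0_iff)
  then have n1: "1 \<le> ?n" by simp
  have nb: "?n \<le> (real Delta + 1) ^ ?D"
  proof -
    have "card V \<le> (Delta + 1) ^ ?D"
      by (rule card_le_ball[OF G C Vne]) (use nbrs_le_maxdeg[OF G] Dg in force)
    then have "real (card V) \<le> real ((Delta + 1) ^ ?D)" by (simp only: of_nat_le_iff)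
    then show ?thesis by (simp add: add.commute)
  qed
  have q: "2 \<le> real CARD('f)" using card_field_ge2[where 'f='f] by simp
  have P1: "?P \<le> ?n * real CARD('f) ^ k * ((1 - p / 2) ^ m * 2 ^ ?D)"
  proof (rule upper_generic[where step=step and k=k and loc=loc and m=m and p=p and V=V and E=E])
    show "\<And>s s' x. s' \<in> set_pmf (step s) \<Longrightarrow> set (s x) \<subseteq> set (s' x)" by (rule mono)
    show "\<And>s s'. Inv k s \<Longrightarrow> s' \<in> set_pmf (step s) \<Longrightarrow> Inv k s'" by (rule inv)
    show "\<And>s a b \<mu>. E a b \<Longrightarrow> knows k \<mu> (s a) \<Longrightarrow> p \<le> measure_pmf.prob (step s) {s'. knows k \<mu> (s' b)}"
      by (rule prog)
  qed (use G C Vne loc p in auto)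
  have "(1 - p / 2) ^ m \<le> exp (- (p / 2 * real m))" using p by (intro one_minus_pow_exp) auto
  also have "\<dots> \<le> exp (- (a * T))" using pm by simp
  finally have "(1 - p / 2) ^ m * 2 ^ ?D \<le> exp (- (a * T)) * 2 ^ ?D" by (intro mult_right_mono) auto
  then have "?n * real CARD('f) ^ k * ((1 - p / 2) ^ m * 2 ^ ?D) \<le> ?n * real CARD('f) ^ k * (exp (- (a * T)) * 2 ^ ?D)"
    by (intro mult_left_mono) auto
  with P1 have P2: "?P \<le> ?n * real CARD('f) ^ k * (exp (- (a * T)) * 2 ^ ?D)" by linarith
  have "?P \<le> exp a / ?n" by (rule final_arith[OF n1 nb q a L Cd T P2])
  moreover have "1 - ?P \<le> measure_pmf.prob (traj step (init_state loc k) m) {xs. \<exists>i<length xs. all_done V k (xs ! i)}"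
    by (rule prob_from_last)
  ultimately show ?thesis by linarith
qed

theorem theorem3:
  fixes Delta :: nat
  shows "\<exists>C c Cp :: real. C > 0 \<and> c > 0 \<and>
    (\<forall>(V :: nat set) E k loc.
       V \<noteq> {} \<and> simple_graph V E \<and> connected_graph V E \<and> max_degree V E \<le> Delta \<and>
       1 \<le> k \<and> k \<le> card V \<and> (\<forall>i<k. loc i \<in> V) \<longrightarrow>
       (let n = card V; D = diameter V E; s0 = (init_state loc k :: 'f::{field,finite} gstate) in
          measure_pmf.prob (traj (sync_round V E) s0 (nat \<lfloor>C * real (k + D)\<rfloor>))
              {xs. \<exists>i<length xs. all_done V k (xs ! i)} \<ge> 1 - Cp / real n
        \<and> measure_pmf.prob (traj (sync_round V E) s0 (nat \<lceil>c * real (k + D)\<rceil>))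
              {xs. \<forall>i<length xs. real i < c * real (k + D) \<longrightarrow> \<not> all_done V k (xs ! i)} \<ge> 1 - Cp / real n
        \<and> measure_pmf.prob (traj (async_step V E) s0 (nat \<lfloor>C * real (k + D)\<rfloor> * n))
              {xs. \<exists>i<length xs. all_done V k (xs ! i)} \<ge> 1 - Cp / real n))"
proof -
  define Dl where "Dl = real Delta + 1"
  define a where "a = 1 / (4 * Dl)"
  define q where "q = real CARD('f)"
  define L where "L = 2 * ln (real Delta + 1) + ln 2 + ln (real CARD('f))"
  define Cc where "Cc = L / a"
  define c where "c = 1 / (4 * (real Delta + 1))"
  define Cp where "Cp = exp a"
  have Dl1: "1 \<le> Dl" by (simp add: Dl_def)
  have a0: "0 < a" using Dl1 by (simp add: a_def)
  have q2: "2 \<le> q" using card_field_ge2[where 'f='f] by (simp add: q_def)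
  have L0: "0 < L"
  proof -
    have "0 \<le> ln (real Delta + 1)" by simp
    moreover have "0 < ln (2::real)" by simp
    moreover have "0 \<le> ln (real CARD('f))" using card_field_ge2[where 'f='f] by simp
    ultimately show ?thesis unfolding L_def by linarith
  qed
  have C0: "0 < Cc" using L0 a0 by (simp add: Cc_def)
  have c0: "0 < c" by (simp add: c_def)
  have Cp1: "1 \<le> Cp" using a0 by (simp add: Cp_def)
  have half: "1 / 2 \<le> 1 - 1 / q" using q2 by (simp add: field_simps)
  have qle: "1 - 1 / q \<le> 1" using q2 by simp
  show ?thesis
  proof (rule exI[of _ Cc], rule exI[of _ c], rule exI[of _ Cp], intro conjI C0 c0 allI impI)
    fix V :: "nat set" and E k loc
    assume H: "V \<noteq> {} \<and> simple_graph V E \<and> connected_graph V E \<and> max_degree V E \<le> Delta \<and>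
       1 \<le> k \<and> k \<le> card V \<and> (\<forall>i<k. loc i \<in> V)"
    then have Vne: "V \<noteq> {}" and G: "simple_graph V E" and Cn: "connected_graph V E"
      and Dg: "max_degree V E \<le> Delta" and k1: "1 \<le> k" and loc: "\<forall>i<k. loc i \<in> V" by auto
    let ?n = "card V"
    let ?D = "diameter V E"
    let ?s0 = "init_state loc k :: 'f gstate"
    define T where "T = nat \<lfloor>Cc * real (k + ?D)\<rfloor>"
    have T: "Cc * real (k + ?D) - 1 \<le> real T"
    proof -
      have "0 \<le> Cc * real (k + ?D)" using C0 by simp
      then have "real T = real_of_int \<lfloor>Cc * real (k + ?D)\<rfloor>" by (simp add: T_def)
      then show ?thesis by linarith
    qed
    have finV: "finite V" using sg_finite[OF G] .
    have npos: "0 < ?n" using finV Vne by (simp add: card_gt_0_iff)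
    have cardN: "0 < card (nbrs V E x) \<and> real (card (nbrs V E x)) \<le> real Delta" if "E x y" for x y
    proof -
      have "y \<in> nbrs V E x" using nbrs_mem[OF G that] .
      then have "0 < card (nbrs V E x)" using finite_nbrs[OF G] by (auto simp: card_gt_0_iff)
      moreover have "card (nbrs V E x) \<le> Delta"
        using nbrs_le_maxdeg[OF G] edge_in_V[OF G that] Dg by (meson order_trans)
      ultimately show ?thesis by simp
    qed
    have S: "1 - Cp / real ?n \<le> measure_pmf.prob (traj (sync_round V E) ?s0 T)
              {xs. \<exists>i<length xs. all_done V k (xs ! i)}"
      unfolding Cp_def
    proof (rule upper_apply[where p="(1 - 1 / q) / Dl" and L=L and Cc=Cc and a=a, OF G Cn Vne loc Dg])
      show "\<And>s s' x. s' \<in> set_pmf (sync_round V E s) \<Longrightarrow> set (s x) \<subseteq> set (s' x)" by (rule sync_mono)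
      show "\<And>s s'. Inv k s \<Longrightarrow> s' \<in> set_pmf (sync_round V E s) \<Longrightarrow> Inv k s'" by (rule sync_Inv)
      fix s :: "'f gstate" and x y \<mu> assume e: "E x y" and kn: "knows k \<mu> (s x)"
      have "(1 - 1 / q) / Dl \<le> (1 - 1 / q) / real (card (nbrs V E x))"
        using cardN[OF e] half by (intro divide_left_mono) (auto simp: Dl_def)
      also have "\<dots> \<le> measure_pmf.prob (sync_round V E s) {s'. knows k \<mu> (s' y)}"
        using sync_prog[where s=s and a=x and b=y and k=k and \<mu>=\<mu>, OF G e kn] by (simp add: q_def)
      finally show "(1 - 1 / q) / Dl \<le> measure_pmf.prob (sync_round V E s) {s'. knows k \<mu> (s' y)}" .
    next
      show "0 \<le> (1 - 1 / q) / Dl" using half Dl1 by simp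
      have "1 - 1 / q \<le> Dl" using qle Dl1 by linarith
      then show "(1 - 1 / q) / Dl \<le> 1" using Dl1 by (simp add: divide_le_eq)
      show "a * real T \<le> (1 - 1 / q) / Dl / 2 * real T"
      proof (rule mult_right_mono)
        have "1 / 2 / Dl \<le> (1 - 1 / q) / Dl" using half Dl1 by (intro divide_right_mono) auto
        have "a = 1 / 2 / Dl / 2" by (simp add: a_def)
        also have "\<dots> \<le> (1 - 1 / q) / Dl / 2"
          by (rule divide_right_mono[OF \<open>1 / 2 / Dl \<le> (1 - 1 / q) / Dl\<close>]) simp
        finally show "a \<le> (1 - 1 / q) / Dl / 2" .
      qed simp
    qed (use a0 L_def Cc_def T in auto)
    have A: "1 - Cp / real ?n \<le> measure_pmf.prob (traj (async_step V E) ?s0 (T * ?n))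
              {xs. \<exists>i<length xs. all_done V k (xs ! i)}"
      unfolding Cp_def
    proof (rule upper_apply[where p="(1 - 1 / q) / (real ?n * Dl)" and L=L and Cc=Cc and a=a, OF G Cn Vne loc Dg])
      show "\<And>s s' x. s' \<in> set_pmf (async_step V E s) \<Longrightarrow> set (s x) \<subseteq> set (s' x)" by (rule async_mono)
      show "\<And>s s'. Inv k s \<Longrightarrow> s' \<in> set_pmf (async_step V E s) \<Longrightarrow> Inv k s'" by (rule async_Inv)
      fix s :: "'f gstate" and x y \<mu> assume e: "E x y" and kn: "knows k \<mu> (s x)"
      have "(1 - 1 / q) / (real ?n * Dl) \<le> (1 - 1 / q) / (real ?n * real (card (nbrs V E x)))"
        using cardN[OF e] half npos by (intro divide_left_mono mult_left_mono mult_pos_pos) (auto simp: Dl_def)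
      also have "\<dots> \<le> measure_pmf.prob (async_step V E s) {s'. knows k \<mu> (s' y)}"
        using async_prog[where s=s and a=x and b=y and k=k and \<mu>=\<mu>, OF G e kn] by (simp add: q_def)
      finally show "(1 - 1 / q) / (real ?n * Dl) \<le> measure_pmf.prob (async_step V E s) {s'. knows k \<mu> (s' y)}" .
    next
      show "0 \<le> (1 - 1 / q) / (real ?n * Dl)" using half Dl1 by simp
      have "1 \<le> real ?n * Dl" using npos Dl1 by (metis mult_mono' of_nat_0_le_iff zero_le_one mult_1 Suc_le_eq of_nat_1 of_nat_le_iff One_nat_def)
      moreover have "1 - 1 / q \<le> 1" by (rule qle)
      ultimately have "1 - 1 / q \<le> real ?n * Dl" by linarith
      then show "(1 - 1 / q) / (real ?n * Dl) \<le> 1" using \<open>1 \<le> real ?n * Dl\<close> by (simp add: divide_le_eq)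
      have "a * real T = ((1 / 2) / (real ?n * Dl) / 2) * real (T * ?n)"
        using npos Dl1 by (simp add: a_def field_simps)
      also have "\<dots> \<le> (1 - 1 / q) / (real ?n * Dl) / 2 * real (T * ?n)"
        using half npos Dl1 by (intro mult_right_mono divide_right_mono) auto
      finally show "a * real T \<le> (1 - 1 / q) / (real ?n * Dl) / 2 * real (T * ?n)" .
    qed (use a0 L_def Cc_def T in auto)
    have Lo: "1 - Cp / real ?n \<le> measure_pmf.prob (traj (sync_round V E) ?s0 (nat \<lceil>c * real (k + ?D)\<rceil>))
              {xs. \<forall>i<length xs. real i < c * real (k + ?D) \<longrightarrow> \<not> all_done V k (xs ! i)}"
    proof (cases "2 \<le> ?n")
      case True
      have "measure_pmf.prob (traj (sync_round V E) ?s0 (nat \<lceil>c * real (k + ?D)\<rceil>)) UNIV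
          \<le> measure_pmf.prob (traj (sync_round V E) ?s0 (nat \<lceil>c * real (k + ?D)\<rceil>))
              {xs. \<forall>i<length xs. real i < c * real (k + ?D) \<longrightarrow> \<not> all_done V k (xs ! i)}"
      proof (rule prob_mono_supp)
        fix xs assume xs: "xs \<in> set_pmf (traj (sync_round V E) ?s0 (nat \<lceil>c * real (k + ?D)\<rceil>))"
        show "xs \<in> {xs. \<forall>i<length xs. real i < c * real (k + ?D) \<longrightarrow> \<not> all_done V k (xs ! i)}"
        proof (intro CollectI allI impI)
          fix i assume i: "i < length xs" and sm: "real i < c * real (k + ?D)"
          have "real i < real (k + ?D) / (4 * (real Delta + 1))" using sm by (simp add: c_def)
          then show "\<not> all_done V k (xs ! i)"
            by (intro lower_sync[OF G Cn True k1 loc Dg refl xs i]) simp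
        qed
      qed
      moreover have "0 \<le> Cp / real ?n" using Cp1 by simp
      ultimately show ?thesis by simp
    next
      case False
      then have "?n = 1" using npos by simp
      then have "1 - Cp / real ?n \<le> 0" using Cp1 by simp
      then show ?thesis using measure_nonneg order_trans by blast
    qed
    show "let n = card V; D = diameter V E; s0 = ?s0 in
          1 - Cp / real n \<le> measure_pmf.prob (traj (sync_round V E) s0 (nat \<lfloor>Cc * real (k + D)\<rfloor>))
              {xs. \<exists>i<length xs. all_done V k (xs ! i)}
        \<and> 1 - Cp / real n \<le> measure_pmf.prob (traj (sync_round V E) s0 (nat \<lceil>c * real (k + D)\<rceil>))
              {xs. \<forall>i<length xs. real i < c * real (k + D) \<longrightarrow> \<not> all_done V k (xs ! i)}
        \<and> 1 - Cp / real n \<le> measure_pmf.prob (traj (async_step V E) s0 (nat \<lfloor>Cc * real (k + D)\<rfloor> * n))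
              {xs. \<exists>i<length xs. all_done V k (xs ! i)}"
      using S A Lo unfolding Let_def T_def by blast
  qed
qed

end
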